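(* Let $d$ be a positive square-free integer, $K=\mathbb{Q}(\sqrt{-d})$, $\mathcal{O}$ its ring of integers, $R$ the set of roots of unity in $K$, $K_1=\{z\in K: z\overline z=1\}$, and $F(d)=\min_{z\in K_1\setminus R}d(z)$. Let $\mathcal{J}$ be the set of proper nonzero ideals $\pi$ of $\mathcal{O}$ such that $\pi$ and $\overline\pi$ are coprime and $\pi^2$ is principal. Then $$F(d)=\min_{\pi\in\mathcal{J}}N_{K/\mathbb{Q}}(\pi).$$ In particular $F(1)=5$ and $F(3)=7$.
   Context: For $z\in K^*$, $\pi_z=\{a\in\mathcal{O}: az\in\mathcal{O}\}$ and $d(z)=N_{K/\mathbb{Q}}(\pi_z)=\mathrm{Card}\,\mathcal{O}/\pi_z$. $\overline{\pi}$ denotes the complex conjugate ideal. *)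

theory Defs
  imports "HOL-Analysis.Analysis" "HOL-Computational_Algebra.Computational_Algebra"
begin

definition QF :: "nat \<Rightarrow> complex set" where
  "QF d = {of_rat a + of_rat b * (\<i> * complex_of_real (sqrt (real d))) | a b. True}"

definition OK :: "nat \<Rightarrow> complex set" where
  "OK d = {x \<in> QF d. algebraic_int x}"

definition roots_unity :: "nat \<Rightarrow> complex set" where
  "roots_unity d = {z \<in> QF d. \<exists>n>0. z ^ n = 1}"

definition K1 :: "nat \<Rightarrow> complex set" where
  "K1 d = {z \<in> QF d. z * cnj z = 1}"

definition is_ideal :: "nat \<Rightarrow> complex set \<Rightarrow> bool" where
  "is_ideal d I \<longleftrightarrow> I \<subseteq> OK d \<and> 0 \<in> I \<and> (\<forall>x\<in>I. \<forall>y\<in>I. x + y \<in> I)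
     \<and> (\<forall>a\<in>OK d. \<forall>x\<in>I. a * x \<in> I)"

definition ideal_gen :: "nat \<Rightarrow> complex set \<Rightarrow> complex set" where
  "ideal_gen d S = \<Inter>{I. is_ideal d I \<and> S \<subseteq> I}"

definition ideal_mult :: "nat \<Rightarrow> complex set \<Rightarrow> complex set \<Rightarrow> complex set" where
  "ideal_mult d I J = ideal_gen d {x * y | x y. x \<in> I \<and> y \<in> J}"

definition principal :: "nat \<Rightarrow> complex set \<Rightarrow> bool" where
  "principal d I \<longleftrightarrow> (\<exists>a\<in>OK d. I = {a * x | x. x \<in> OK d})"

definition conj_ideal :: "complex set \<Rightarrow> complex set" where
  "conj_ideal I = cnj ` I"

text \<open>Absolute norm N(I) = Card(O / I), the number of cosets of I in O.\<close>
definition ideal_norm :: "nat \<Rightarrow> complex set \<Rightarrow> nat" where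
  "ideal_norm d I = card ((\<lambda>x. (\<lambda>y. x + y) ` I) ` OK d)"

definition pi_z :: "nat \<Rightarrow> complex \<Rightarrow> complex set" where
  "pi_z d z = {a \<in> OK d. a * z \<in> OK d}"

definition dz :: "nat \<Rightarrow> complex \<Rightarrow> nat" where
  "dz d z = ideal_norm d (pi_z d z)"

text \<open>F(d) = min (as Inf on nat, which is attained when nonempty) over z in K_1 minus R of d(z).\<close>
definition F :: "nat \<Rightarrow> nat" where
  "F d = Inf (dz d ` (K1 d - roots_unity d))"

definition JJ :: "nat \<Rightarrow> complex set set" where
  "JJ d = {I. is_ideal d I \<and> I \<noteq> {0} \<and> I \<noteq> OK d
             \<and> ideal_gen d (I \<union> conj_ideal I) = OK d
             \<and> principal d (ideal_mult d I I)}"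

end

theory Submission
  imports Defs
begin

definition rr :: "nat \<Rightarrow> complex" where
  "rr d = \<i> * complex_of_real (sqrt (real d))"

lemma rr_sq: "rr d * rr d = - of_nat d"
proof -
  have s: "sqrt (real d) * sqrt (real d) = real d" by simp
  have "complex_of_real (sqrt (real d)) * complex_of_real (sqrt (real d)) = of_nat d"
    by (metis of_real_mult s of_real_of_nat_eq)
  then show ?thesis by (simp add: rr_def algebra_simps)
qed

lemma rr_sq2: "rr d ^ 2 = - of_nat d"
  using rr_sq by (simp add: power2_eq_square)

lemma cnj_rr [simp]: "cnj (rr d) = - rr d"
  by (simp add: rr_def)

lemma of_real_of_rat_c: "complex_of_real (of_rat q) = of_rat q"
proof -
  obtain n m where "q = of_int n / of_int m"
    by (metis quotient_of_div surj_pair)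
  then show ?thesis by (simp add: of_rat_divide)
qed

lemma QF_alt: "x \<in> QF d \<longleftrightarrow> (\<exists>a\<in>\<rat>. \<exists>b\<in>\<rat>. x = of_real a + of_real b * rr d)"
proof
  assume "x \<in> QF d"
  then obtain a b where "x = of_rat a + of_rat b * rr d" by (auto simp: QF_def rr_def)
  then have "x = of_real (of_rat a) + of_real (of_rat b) * rr d"
    by (simp add: of_real_of_rat_c)
  then show "\<exists>a\<in>\<rat>. \<exists>b\<in>\<rat>. x = of_real a + of_real b * rr d" using Rats_of_rat by blast
next
  assume "\<exists>a\<in>\<rat>. \<exists>b\<in>\<rat>. x = of_real a + of_real b * rr d"
  then obtain a b where "x = of_real (of_rat a) + of_real (of_rat b) * rr d"
    by (auto elim!: Rats_cases)
  then have "x = of_rat a + of_rat b * rr d" by (simp add: of_real_of_rat_c)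
  then show "x \<in> QF d" by (auto simp: QF_def rr_def)
qed

lemma coord_unique:
  assumes "d > 0" "of_real a + of_real b * rr d = of_real a' + of_real b' * rr d"
  shows "a = a' \<and> b = b'"
proof -
  from assms(2) have "Re (of_real a + of_real b * rr d) = Re (of_real a' + of_real b' * rr d)"
       "Im (of_real a + of_real b * rr d) = Im (of_real a' + of_real b' * rr d)" by simp_all
  then have "a = a'" "b * sqrt d = b' * sqrt d" by (simp_all add: rr_def)
  moreover have "sqrt d > 0" using assms(1) by simp
  ultimately show ?thesis by simp
qed

definition inZR :: "nat \<Rightarrow> complex \<Rightarrow> bool" where
  "inZR d x \<longleftrightarrow> (\<exists>A B::int. x = of_int A + of_int B * rr d)"

lemma zr_add: "inZR d x \<Longrightarrow> inZR d y \<Longrightarrow> inZR d (x + y)"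
  unfolding inZR_def
proof (elim exE)
  fix A B C D assume "x = of_int A + of_int B * rr d" "y = of_int C + of_int D * rr d"
  then have "x + y = of_int (A + C) + of_int (B + D) * rr d" by (simp add: algebra_simps)
  then show "\<exists>A B. x + y = of_int A + of_int B * rr d" by blast
qed

lemma zr_mult: "inZR d x \<Longrightarrow> inZR d y \<Longrightarrow> inZR d (x * y)"
  unfolding inZR_def
proof (elim exE)
  fix A B C D assume "x = of_int A + of_int B * rr d" "y = of_int C + of_int D * rr d"
  then have "x * y = of_int A * of_int C + of_int B * of_int D * (rr d * rr d)
     + of_int (A * D + B * C) * rr d" by (simp add: algebra_simps)
  also have "\<dots> = of_int (A * C - int d * B * D) + of_int (A * D + B * C) * rr d"
    by (simp add: rr_sq algebra_simps)
  finally show "\<exists>A B. x * y = of_int A + of_int B * rr d" by blast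
qed

lemma zr_int [simp]: "inZR d (of_int n)"
  unfolding inZR_def by (rule exI[of _ n], rule exI[of _ 0]) simp

lemma zr_1 [simp]: "inZR d 1" using zr_int[of d 1] by simp
lemma zr_0 [simp]: "inZR d 0" using zr_int[of d 0] by simp

lemma zr_scale: "inZR d x \<Longrightarrow> inZR d (of_int n * x)"
  by (rule zr_mult) simp_all

lemma zr_scale_nat: "inZR d x \<Longrightarrow> inZR d (of_nat n * x)"
  using zr_scale[of d x "int n"] by simp

lemma zr_minus: "inZR d x \<Longrightarrow> inZR d (- x)"
  using zr_scale[of d x "-1"] by simp

lemma zr_sum: "finite A \<Longrightarrow> (\<And>i. i \<in> A \<Longrightarrow> inZR d (f i)) \<Longrightarrow> inZR d (sum f A)"
  by (induction A rule: finite_induct) (auto intro: zr_add)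

lemma zr_cnj: "inZR d x \<Longrightarrow> inZR d (cnj x)"
  unfolding inZR_def
proof (elim exE)
  fix A B assume "x = of_int A + of_int B * rr d"
  then have "cnj x = of_int A + of_int (-B) * rr d" by simp
  then show "\<exists>A B. cnj x = of_int A + of_int B * rr d" by blast
qed

lemma zr_norm: "inZR d x \<Longrightarrow> x * cnj x \<in> \<int>"
  unfolding inZR_def
proof (elim exE)
  fix A B assume "x = of_int A + of_int B * rr d"
  then have "x * cnj x = of_int A * of_int A - of_int B * of_int B * (rr d * rr d)"
    by (simp add: algebra_simps)
  also have "\<dots> = of_int (A * A + int d * B * B)" by (simp add: rr_sq)
  finally show "x * cnj x \<in> \<int>" by simp
qed

lemma zr_QF: "inZR d x \<Longrightarrow> x \<in> QF d"
  unfolding inZR_def QF_alt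
  by (auto intro!: bexI[of _ "real_of_int _"])

lemma qf_add: "x \<in> QF d \<Longrightarrow> y \<in> QF d \<Longrightarrow> x + y \<in> QF d"
  unfolding QF_alt
proof (elim bexE)
  fix a b a' b' assume h: "a \<in> \<rat>" "b \<in> \<rat>" "x = complex_of_real a + complex_of_real b * rr d"
    "a' \<in> \<rat>" "b' \<in> \<rat>" "y = complex_of_real a' + complex_of_real b' * rr d"
  then have "x + y = of_real (a + a') + of_real (b + b') * rr d" by (simp add: algebra_simps)
  with h show "\<exists>a\<in>\<rat>. \<exists>b\<in>\<rat>. x + y = complex_of_real a + complex_of_real b * rr d"
    by (meson Rats_add)
qed

lemma qf_mult: "x \<in> QF d \<Longrightarrow> y \<in> QF d \<Longrightarrow> x * y \<in> QF d"
  unfolding QF_alt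
proof (elim bexE)
  fix a b a' b' assume h: "a \<in> \<rat>" "b \<in> \<rat>" "x = complex_of_real a + complex_of_real b * rr d"
    "a' \<in> \<rat>" "b' \<in> \<rat>" "y = complex_of_real a' + complex_of_real b' * rr d"
  then have "x * y = of_real a * of_real a' + of_real b * of_real b' * (rr d * rr d)
     + of_real (a * b' + b * a') * rr d" by (simp add: algebra_simps)
  also have "\<dots> = of_real (a * a' - real d * b * b') + of_real (a * b' + b * a') * rr d"
    by (simp add: rr_sq algebra_simps)
  finally have "x * y = of_real (a * a' - real d * b * b') + of_real (a * b' + b * a') * rr d" .
  moreover have "a * a' - real d * b * b' \<in> \<rat>" "a * b' + b * a' \<in> \<rat>"
    using h by (auto intro!: Rats_add Rats_mult Rats_diff)
  ultimately show "\<exists>a\<in>\<rat>. \<exists>b\<in>\<rat>. x * y = complex_of_real a + complex_of_real b * rr d"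
    by blast
qed

lemma qf_cnj: "x \<in> QF d \<Longrightarrow> cnj x \<in> QF d"
  unfolding QF_alt
proof (elim bexE)
  fix a b assume h: "a \<in> \<rat>" "b \<in> \<rat>" "x = complex_of_real a + complex_of_real b * rr d"
  then have "cnj x = of_real a + of_real (-b) * rr d" by simp
  with h show "\<exists>a\<in>\<rat>. \<exists>b\<in>\<rat>. cnj x = complex_of_real a + complex_of_real b * rr d"
    by (meson Rats_minus_iff)
qed

lemma qf_rat: "a \<in> \<rat> \<Longrightarrow> complex_of_real a \<in> QF d"
  unfolding QF_alt by (rule bexI[of _ a]) (auto intro!: bexI[of _ 0])

lemma qf_int: "complex_of_int n \<in> QF d"
  using qf_rat[of "real_of_int n" d] by simp

lemma qf_scale_rat: "a \<in> \<rat> \<Longrightarrow> x \<in> QF d \<Longrightarrow> complex_of_real a * x \<in> QF d"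
  by (rule qf_mult) (auto intro: qf_rat)

lemma qf_diff: "x \<in> QF d \<Longrightarrow> y \<in> QF d \<Longrightarrow> x - y \<in> QF d"
  using qf_add[of x d "of_int (-1) * y"] qf_mult[OF qf_int, of y d "-1"] by simp

lemma qf_real_rat: "x \<in> QF d \<Longrightarrow> d > 0 \<Longrightarrow> x \<in> \<real> \<Longrightarrow> \<exists>a\<in>\<rat>. x = of_real a"
  unfolding QF_alt
proof (elim bexE)
  fix a b assume h: "a \<in> \<rat>" "b \<in> \<rat>" "x = complex_of_real a + complex_of_real b * rr d" "d > 0" "x \<in> \<real>"
  then have "Im x = b * sqrt d" by (simp add: rr_def)
  moreover have "Im x = 0" using h(5) by (simp add: complex_is_Real_iff)
  moreover have "sqrt d > 0" using h(4) by simp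
  ultimately have "b = 0" by simp
  with h show ?thesis by auto
qed

lemma qf_denom: "x \<in> QF d \<Longrightarrow> \<exists>D::int. D > 0 \<and> inZR d (of_int D * x)"
  unfolding QF_alt
proof (elim bexE)
  fix a b assume h: "a \<in> \<rat>" "b \<in> \<rat>" "x = complex_of_real a + complex_of_real b * rr d"
  obtain p1 q1 where 1: "q1 > 0" "a = of_int p1 / of_int q1" using h(1) by (auto elim: Rats_cases')
  obtain p2 q2 where 2: "q2 > 0" "b = of_int p2 / of_int q2" using h(2) by (auto elim: Rats_cases')
  have a: "complex_of_real a = of_int p1 / of_int q1" using 1 by simp
  have b: "complex_of_real b = of_int p2 / of_int q2" using 2 by simp
  have "of_int (q1 * q2) * x = of_int (p1 * q2) + of_int (p2 * q1) * rr d"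
    using 1 2 unfolding h(3) a b by (simp add: field_simps)
  then have "inZR d (of_int (q1 * q2) * x)" unfolding inZR_def by blast
  moreover have "q1 * q2 > 0" using 1 2 by simp
  ultimately show ?thesis by blast
qed

definition bd :: "nat \<Rightarrow> complex \<Rightarrow> bool" where
  "bd d x \<longleftrightarrow> (\<exists>D::int. D > 0 \<and> (\<forall>k. inZR d (of_int D * x ^ k)))"

lemma bd_mult: "bd d x \<Longrightarrow> bd d y \<Longrightarrow> bd d (x * y)"
  unfolding bd_def
proof (elim exE conjE)
  fix D1 D2 :: int assume h: "D1 > 0" "\<forall>k. inZR d (of_int D1 * x ^ k)" "D2 > 0" "\<forall>k. inZR d (of_int D2 * y ^ k)"
  have "inZR d (of_int (D1 * D2) * (x * y) ^ k)" for k
  proof -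
    have eq: "of_int (D1 * D2) * (x * y) ^ k = (of_int D1 * x ^ k) * (of_int D2 * y ^ k)"
      by (simp add: power_mult_distrib algebra_simps)
    show ?thesis unfolding eq by (simp add: h zr_mult)
  qed
  moreover have "D1 * D2 > 0" using h by simp
  ultimately show "\<exists>D. D > 0 \<and> (\<forall>k. inZR d (of_int D * (x * y) ^ k))" by blast
qed

lemma bd_add: "bd d x \<Longrightarrow> bd d y \<Longrightarrow> bd d (x + y)"
  unfolding bd_def
proof (elim exE conjE)
  fix D1 D2 :: int assume h: "D1 > 0" "\<forall>k. inZR d (of_int D1 * x ^ k)" "D2 > 0" "\<forall>k. inZR d (of_int D2 * y ^ k)"
  have "inZR d (of_int (D1 * D2) * (x + y) ^ k)" for k
  proof -
    have "of_int (D1 * D2) * (x + y) ^ k =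
       (\<Sum>i\<le>k. of_nat (k choose i) * ((of_int D1 * x ^ i) * (of_int D2 * y ^ (k - i))))"
      by (simp add: binomial_ring sum_distrib_left algebra_simps)
    also have "inZR d \<dots>"
    proof (intro zr_sum zr_scale_nat)
      fix i show "inZR d ((of_int D1 * x ^ i) * (of_int D2 * y ^ (k - i)))"
        by (rule zr_mult) (use h in auto)
    qed simp
    finally show ?thesis .
  qed
  moreover have "D1 * D2 > 0" using h by simp
  ultimately show "\<exists>D. D > 0 \<and> (\<forall>k. inZR d (of_int D * (x + y) ^ k))" by blast
qed

lemma bd_int: "bd d (of_int n)"
  unfolding bd_def
  by (rule exI[of _ 1]) (auto simp flip: of_int_power)

lemma qf_power: "x \<in> QF d \<Longrightarrow> x ^ k \<in> QF d"
proof (induction k)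
  case 0 then show ?case using qf_int[of 1 d] by simp
next
  case (Suc k) then show ?case by (simp add: qf_mult)
qed

lemma alg_int_bd:
  assumes qf: "x \<in> QF d" and ai: "algebraic_int x"
  shows "bd d x"
proof -
  from ai obtain p where p: "lead_coeff p = 1" "\<forall>i. coeff p i \<in> \<int>" "poly p x = 0"
    by (auto simp: algebraic_int.simps)
  define n where "n = degree p"
  have npos: "n > 0"
  proof (rule ccontr)
    assume "\<not> n > 0"
    then have "degree p = 0" by (simp add: n_def)
    then have "poly p x = lead_coeff p" by (simp add: poly_altdef)
    with p show False by simp
  qed
  have "\<forall>i. \<exists>m::int. coeff p i = of_int m" using p(2) by (blast elim: Ints_cases)
  then obtain c where c: "\<And>i. coeff p i = of_int (c i)" by metis
  have "\<forall>i. \<exists>D::int. D > 0 \<and> inZR d (of_int D * x ^ i)"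
    using qf_denom[OF qf_power[OF qf]] by blast
  then obtain Df where Df: "\<And>i. Df i > 0 \<and> inZR d (of_int (Df i) * x ^ i)" by metis
  define D where "D = (\<Prod>i<n. Df i)"
  have Dpos: "D > 0" unfolding D_def using Df by (intro prod_pos) auto
  have small: "inZR d (of_int D * x ^ i)" if "i < n" for i
  proof -
    have "D = Df i * (\<Prod>j\<in>{..<n} - {i}. Df j)"
      unfolding D_def using that by (subst prod.remove[of _ i]) auto
    then have "of_int D * x ^ i = of_int (\<Prod>j\<in>{..<n} - {i}. Df j) * (of_int (Df i) * x ^ i)"
      by (simp add: algebra_simps)
    then show ?thesis using Df[of i] zr_scale by metis
  qed
  have cn: "c n = 1" using p(1) c[of n] by (simp add: n_def)
  have rel: "x ^ n = - (\<Sum>i<n. of_int (c i) * x ^ i)"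
  proof -
    have "0 = (\<Sum>i\<le>n. of_int (c i) * x ^ i)"
      using p(3) by (simp add: poly_altdef c n_def)
    also have "\<dots> = (\<Sum>i<n. of_int (c i) * x ^ i) + x ^ n"
      using cn by (simp add: lessThan_Suc_atMost[symmetric])
    finally show ?thesis by (simp add: eq_neg_iff_add_eq_0 add.commute)
  qed
  have "inZR d (of_int D * x ^ k)" for k
  proof (induction k rule: less_induct)
    case (less k)
    show ?case
    proof (cases "k < n")
      case True then show ?thesis by (rule small)
    next
      case False
      have "x ^ k = x ^ (k - n) * x ^ n" using False by (simp flip: power_add)
      also have "\<dots> = - (\<Sum>i<n. of_int (c i) * x ^ (k - n + i))"
        by (simp only: rel) (simp add: sum_distrib_left power_add mult.assoc mult.left_commute)
      finally have "of_int D * x ^ k = - (\<Sum>i<n. of_int (c i) * (of_int D * x ^ (k - n + i)))"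
        by (simp add: sum_distrib_left algebra_simps)
      also have "inZR d \<dots>"
      proof (rule zr_minus, rule zr_sum)
        fix i assume "i \<in> {..<n}"
        then show "inZR d (of_int (c i) * (of_int D * x ^ (k - n + i)))"
          using False npos by (intro zr_scale[of d "of_int D * x ^ (k - n + i)"] less) auto
      qed simp
      finally show ?thesis .
    qed
  qed
  with Dpos show ?thesis unfolding bd_def by blast
qed

lemma rat_bounded_int:
  fixes a :: real and D :: int
  assumes "a \<in> \<rat>" "D > 0" "\<And>k. \<exists>m::int. of_int D * a ^ k = of_int m"
  shows "a \<in> \<int>"
proof -
  obtain p q where pq: "q > 0" "coprime p q" "a = of_int p / of_int q"
    using assms(1) by (auto elim: Rats_cases')
  show ?thesis
  proof (cases "q = 1")
    case True then show ?thesis using pq by simp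
  next
    case False
    then have q2: "q \<ge> 2" using pq by simp
    define k where "k = nat D"
    obtain m where m: "of_int D * a ^ k = of_int m" using assms(3) by blast
    then have "real_of_int (D * p ^ k) = of_int (m * q ^ k)"
      using pq by (simp add: power_divide field_simps)
    then have eq: "D * p ^ k = m * q ^ k" by linarith
    then have "q ^ k dvd D * p ^ k" by simp
    moreover have "coprime (q ^ k) (p ^ k)" using pq by (simp add: coprime_commute)
    ultimately have "q ^ k dvd D" using coprime_dvd_mult_left_iff by blast
    then have "q ^ k \<le> D" using assms(2) by (simp add: zdvd_imp_le)
    moreover have "(2::int) ^ k \<le> q ^ k" using q2 by (simp add: power_mono)
    moreover have "int k < 2 ^ k" by (metis of_nat_less_two_power)
    ultimately show ?thesis using assms(2) by (simp add: k_def)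
  qed
qed

lemma trn_alg:
  assumes "x + cnj x \<in> \<int>" "x * cnj x \<in> \<int>"
  shows "algebraic_int x"
proof -
  obtain T N where TN: "x + cnj x = of_int T" "x * cnj x = of_int N"
    using assms by (metis Ints_cases)
  define p where "p = [:of_int N, - of_int T, 1 :: complex:]"
  have "poly p x = x * cnj x - (x + cnj x) * x + x * x"
    by (simp add: p_def TN algebra_simps)
  also have "\<dots> = 0" by (simp add: algebra_simps)
  finally have "poly p x = 0" .
  moreover have "lead_coeff p = 1" by (simp add: p_def)
  moreover have "\<forall>i. coeff p i \<in> \<int>"
    by (auto simp: p_def coeff_pCons split: nat.splits)
  ultimately show ?thesis by (intro algebraic_int.intros)
qed

lemma cnj_mult_real: "x * cnj x \<in> \<real>"
  by (simp add: complex_is_Real_iff)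

lemma bd_norm:
  assumes "d > 0" "x \<in> QF d" "bd d x"
  shows "x * cnj x \<in> \<int>"
proof -
  obtain a where a: "a \<in> \<rat>" "x * cnj x = of_real a"
    using qf_real_rat[OF qf_mult[OF assms(2) qf_cnj[OF assms(2)]] assms(1) cnj_mult_real] by blast
  obtain D :: int where D: "D > 0" "\<And>k. inZR d (of_int D * x ^ k)"
    using assms(3) unfolding bd_def by blast
  have "\<exists>m::int. of_int (D * D) * a ^ k = of_int m" for k
  proof -
    have "(of_int D * x ^ k) * cnj (of_int D * x ^ k) \<in> \<int>" using D(2) zr_norm by blast
    then obtain m where "(of_int D * x ^ k) * cnj (of_int D * x ^ k) = of_int m" by (metis Ints_cases)
    moreover have "(of_int D * x ^ k) * cnj (of_int D * x ^ k) = of_int (D * D) * (x * cnj x) ^ k"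
      by (simp add: power_mult_distrib algebra_simps)
    ultimately have "complex_of_real (of_int (D * D) * a ^ k) = complex_of_real (of_int m)"
      using a(2) by simp
    then show ?thesis using of_real_eq_iff by blast
  qed
  then have "a \<in> \<int>" using rat_bounded_int[OF a(1), of "D * D"] D(1) by simp
  then show ?thesis using a(2) by (metis Ints_cases Ints_of_int of_real_of_int_eq)
qed

lemma OK_bd: "d > 0 \<Longrightarrow> x \<in> OK d \<longleftrightarrow> x \<in> QF d \<and> bd d x"
proof
  assume "x \<in> OK d" then show "x \<in> QF d \<and> bd d x"
    by (auto simp: OK_def intro: alg_int_bd)
next
  assume d: "d > 0" and h: "x \<in> QF d \<and> bd d x"
  have n1: "x * cnj x \<in> \<int>" using bd_norm d h by blast
  have b1: "bd d (x + 1)" using bd_add[OF _ bd_int[of d 1]] h by simp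
  have q1: "x + 1 \<in> QF d" using qf_add[OF _ qf_int[of 1 d]] h by simp
  have "(x + 1) * cnj (x + 1) \<in> \<int>" using bd_norm[OF d q1 b1] .
  moreover have "(x + 1) * cnj (x + 1) = x * cnj x + (x + cnj x) + 1" by (simp add: algebra_simps)
  ultimately have "x + cnj x = (x + 1) * cnj (x + 1) - x * cnj x - 1" by simp
  also have "\<dots> \<in> \<int>" using n1 \<open>(x + 1) * cnj (x + 1) \<in> \<int>\<close> by (intro Ints_diff) auto
  finally have "x + cnj x \<in> \<int>" .
  with n1 h show "x \<in> OK d" by (auto simp: OK_def intro: trn_alg)
qed

lemma OK_iff: "d > 0 \<Longrightarrow> x \<in> OK d \<longleftrightarrow> x \<in> QF d \<and> x + cnj x \<in> \<int> \<and> x * cnj x \<in> \<int>"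
proof
  assume d: "d > 0" and x: "x \<in> OK d"
  then have q: "x \<in> QF d" "bd d x" using OK_bd by auto
  have n1: "x * cnj x \<in> \<int>" using bd_norm d q by blast
  have b1: "bd d (x + 1)" using bd_add[OF _ bd_int[of d 1]] q by simp
  have q1: "x + 1 \<in> QF d" using qf_add[OF _ qf_int[of 1 d]] q by simp
  have "(x + 1) * cnj (x + 1) \<in> \<int>" using bd_norm[OF d q1 b1] .
  moreover have "(x + 1) * cnj (x + 1) = x * cnj x + (x + cnj x) + 1" by (simp add: algebra_simps)
  ultimately have "x + cnj x = (x + 1) * cnj (x + 1) - x * cnj x - 1" by simp
  also have "\<dots> \<in> \<int>" using n1 \<open>(x + 1) * cnj (x + 1) \<in> \<int>\<close> by (intro Ints_diff) auto
  finally show "x \<in> QF d \<and> x + cnj x \<in> \<int> \<and> x * cnj x \<in> \<int>" using n1 q by blast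
next
  assume "x \<in> QF d \<and> x + cnj x \<in> \<int> \<and> x * cnj x \<in> \<int>"
  then show "x \<in> OK d" by (auto simp: OK_def intro: trn_alg)
qed

lemma OK_add: "d > 0 \<Longrightarrow> x \<in> OK d \<Longrightarrow> y \<in> OK d \<Longrightarrow> x + y \<in> OK d"
  by (auto simp: OK_bd intro: qf_add bd_add)

lemma OK_mult: "d > 0 \<Longrightarrow> x \<in> OK d \<Longrightarrow> y \<in> OK d \<Longrightarrow> x * y \<in> OK d"
  by (auto simp: OK_bd intro: qf_mult bd_mult)

lemma OK_int [simp]: "of_int n \<in> OK d"
  by (auto simp: OK_def qf_int)

lemma OK_nat [simp]: "of_nat n \<in> OK d"
  using OK_int[of "int n" d] by simp

lemma OK_0 [simp]: "0 \<in> OK d" and OK_1 [simp]: "1 \<in> OK d"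
  using OK_int[of 0 d] OK_int[of 1 d] by simp_all

lemma OK_minus: "x \<in> OK d \<Longrightarrow> - x \<in> OK d"
  using qf_mult[OF qf_int, of x d "-1"] by (auto simp: OK_def)

lemma OK_diff: "d > 0 \<Longrightarrow> x \<in> OK d \<Longrightarrow> y \<in> OK d \<Longrightarrow> x - y \<in> OK d"
  using OK_add[of d x "-y"] OK_minus[of y d] by simp

lemma OK_cnj: "x \<in> OK d \<Longrightarrow> cnj x \<in> OK d"
  by (auto simp: OK_def qf_cnj)

lemma OK_QF: "x \<in> OK d \<Longrightarrow> x \<in> QF d"
  by (simp add: OK_def)

lemma OK_real_int: "d > 0 \<Longrightarrow> x \<in> OK d \<Longrightarrow> x \<in> \<real> \<Longrightarrow> x \<in> \<int>"
proof -
  assume h: "d > 0" "x \<in> OK d" "x \<in> \<real>"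
  then obtain a where a: "a \<in> \<rat>" "x = of_real a" using qf_real_rat OK_QF by blast
  then have "algebraic_int a" using h(2) by (simp add: OK_def)
  then have "a \<in> \<int>" using a(1) rational_algebraic_int_is_int by blast
  then obtain m where "a = of_int m" by (elim Ints_cases)
  then show "x \<in> \<int>" using a(2) by simp
qed

lemma OK_norm_int: "d > 0 \<Longrightarrow> x \<in> OK d \<Longrightarrow> x * cnj x \<in> \<int>"
  using OK_iff by blast

lemma sqfree_rat:
  fixes c :: real
  assumes sf: "squarefree d" and c: "c \<in> \<rat>" and m: "real d * c ^ 2 = of_int m"
  shows "c \<in> \<int>"
proof -
  obtain p q where pq: "q > 0" "coprime p q" "c = of_int p / of_int q"
    using c by (auto elim: Rats_cases')
  have "real_of_int (int d * p ^ 2) = real_of_int (m * q ^ 2)"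
    using m pq by (simp add: power_divide field_simps)
  then have "int d * p ^ 2 = m * q ^ 2" by linarith
  then have "q ^ 2 dvd int d * p ^ 2" by simp
  moreover have "coprime (q ^ 2) (p ^ 2)" using pq by (simp add: coprime_commute)
  ultimately have "q ^ 2 dvd int d" using coprime_dvd_mult_left_iff by blast
  then have "int ((nat q) ^ 2) dvd int d" using pq by simp
  then have "(nat q) ^ 2 dvd d" by (simp only: int_dvd_int_iff)
  then have "nat q dvd 1" using sf squarefreeD by blast
  then have "q = 1" using pq by simp
  then show ?thesis using pq by simp
qed

lemma OK_half:
  assumes d: "d > 0" "squarefree d" and x: "x \<in> OK d"
  shows "\<exists>A B::int. x = (of_int A + of_int B * rr d) / 2 \<and> 4 dvd (A ^ 2 + int d * B ^ 2)"
proof -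
  from x d have xq: "x \<in> QF d" and tr: "x + cnj x \<in> \<int>" and nm: "x * cnj x \<in> \<int>"
    using OK_iff by blast+
  obtain a b where ab: "a \<in> \<rat>" "b \<in> \<rat>" "x = of_real a + of_real b * rr d"
    using xq QF_alt by blast
  have "x + cnj x = of_real (2 * a)" using ab by simp
  moreover obtain T where "x + cnj x = of_int T" using tr by (elim Ints_cases)
  ultimately have "complex_of_real (2 * a) = complex_of_real (of_int T)" by simp
  then have A: "2 * a = of_int T" using of_real_eq_iff by blast
  have "x * cnj x = of_real a * of_real a - of_real b * of_real b * (rr d * rr d)"
    using ab by (simp add: algebra_simps)
  also have "\<dots> = of_real (a ^ 2 + real d * b ^ 2)"
    by (simp add: rr_sq power2_eq_square)
  finally have nx: "x * cnj x = of_real (a ^ 2 + real d * b ^ 2)" .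
  obtain N0 where "x * cnj x = of_int N0" using nm by (elim Ints_cases)
  with nx have "complex_of_real (a ^ 2 + real d * b ^ 2) = complex_of_real (of_int N0)" by simp
  then have N: "a ^ 2 + real d * b ^ 2 = of_int N0" using of_real_eq_iff by blast
  have "real d * (2 * b) ^ 2 = of_int (4 * N0 - T ^ 2)"
    using N A[symmetric] by (simp add: power2_eq_square algebra_simps)
  moreover have "2 * b \<in> \<rat>" using ab(2) by (simp add: Rats_mult)
  ultimately have "2 * b \<in> \<int>" using sqfree_rat[OF d(2)] by blast
  then obtain B where B: "2 * b = of_int B" by (elim Ints_cases)
  have "x = (of_real (2 * a) + of_real (2 * b) * rr d) / 2" using ab by (simp add: field_simps)
  then have "x = (of_int T + of_int B * rr d) / 2" using A B by simp
  moreover have "T ^ 2 + int d * B ^ 2 = 4 * N0"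
  proof -
    have "real_of_int (T ^ 2 + int d * B ^ 2) = (2 * a) ^ 2 + real d * (2 * b) ^ 2"
      using A B by simp
    also have "\<dots> = 4 * (a ^ 2 + real d * b ^ 2)" by (simp add: power2_eq_square algebra_simps)
    also have "\<dots> = real_of_int (4 * N0)" using N by simp
    finally show ?thesis by (simp only: of_int_eq_iff)
  qed
  ultimately have "x = (of_int T + of_int B * rr d) / 2" "4 dvd T ^ 2 + int d * B ^ 2" by simp_all
  then show ?thesis by blast
qed

lemma half_OK:
  assumes d: "d > 0" and h: "4 dvd (A ^ 2 + int d * B ^ 2)"
  shows "(of_int A + of_int B * rr d) / 2 \<in> OK d"
proof -
  let ?x = "(of_int A + of_int B * rr d) / 2"
  have "(complex_of_int A + complex_of_int B * rr d) / 2 = complex_of_real (real_of_int A / 2) + complex_of_real (real_of_int B / 2) * rr d" by (simp add: add_divide_distrib)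
  then have q: "?x \<in> QF d" unfolding QF_alt
    by (intro bexI[of _ "real_of_int A / 2"] bexI[of _ "real_of_int B / 2"]) auto
  have "?x + cnj ?x = of_int A" by (simp add: field_simps)
  then have t: "?x + cnj ?x \<in> \<int>" by simp
  obtain N where N: "A ^ 2 + int d * B ^ 2 = 4 * N" using h by (elim dvdE)
  have "?x * cnj ?x = (of_int A * of_int A - of_int B * of_int B * (rr d * rr d)) / 4"
    by (simp add: field_simps)
  also have "\<dots> = of_int (A ^ 2 + int d * B ^ 2) / 4" by (simp add: rr_sq power2_eq_square)
  also have "\<dots> = of_int N" using N by simp
  finally have n: "?x * cnj ?x \<in> \<int>" by simp
  show ?thesis using OK_iff[OF d] q t n by blast
qed

section \<open>Ideals\<close>

lemma is_idealD:
  assumes "is_ideal d I"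
  shows "I \<subseteq> OK d" "0 \<in> I" "\<And>x y. x \<in> I \<Longrightarrow> y \<in> I \<Longrightarrow> x + y \<in> I"
    "\<And>a x. a \<in> OK d \<Longrightarrow> x \<in> I \<Longrightarrow> a * x \<in> I"
  using assms unfolding is_ideal_def by blast+

lemma ideal_OK: "d > 0 \<Longrightarrow> is_ideal d (OK d)"
  unfolding is_ideal_def by (auto intro: OK_add OK_mult)

lemma ideal_minus: "is_ideal d I \<Longrightarrow> x \<in> I \<Longrightarrow> - x \<in> I"
  using is_idealD(4)[of d I "-1" x] OK_minus[OF OK_1] by simp

lemma ideal_diff: "is_ideal d I \<Longrightarrow> x \<in> I \<Longrightarrow> y \<in> I \<Longrightarrow> x - y \<in> I"
  using is_idealD(3)[of d I x "-y"] ideal_minus[of d I y] by simp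

lemma ideal_int: "is_ideal d I \<Longrightarrow> x \<in> I \<Longrightarrow> of_int n * x \<in> I"
  using is_idealD(4)[of d I "of_int n" x] by simp

lemma ideal_sub: "is_ideal d I \<Longrightarrow> x \<in> I \<Longrightarrow> x \<in> OK d"
  using is_idealD(1) by blast

lemma ideal_gen_sup: "S \<subseteq> ideal_gen d S"
  unfolding ideal_gen_def by blast

lemma ideal_gen_least: "is_ideal d I \<Longrightarrow> S \<subseteq> I \<Longrightarrow> ideal_gen d S \<subseteq> I"
  unfolding ideal_gen_def by blast

lemma ideal_gen_ideal:
  assumes d: "d > 0" and S: "S \<subseteq> OK d"
  shows "is_ideal d (ideal_gen d S)"
proof -
  have ne: "OK d \<in> {I. is_ideal d I \<and> S \<subseteq> I}" using ideal_OK[OF d] S by blast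
  have 1: "ideal_gen d S \<subseteq> OK d" unfolding ideal_gen_def using ne by blast
  have 2: "0 \<in> ideal_gen d S" unfolding ideal_gen_def using is_idealD(2) by blast
  have 3: "\<forall>x\<in>ideal_gen d S. \<forall>y\<in>ideal_gen d S. x + y \<in> ideal_gen d S"
    unfolding ideal_gen_def using is_idealD(3) by blast
  have 4: "\<forall>a\<in>OK d. \<forall>x\<in>ideal_gen d S. a * x \<in> ideal_gen d S"
    unfolding ideal_gen_def using is_idealD(4) by blast
  show ?thesis using 1 2 3 4 unfolding is_ideal_def by blast
qed

lemma ideal_gen_in_OK: "d > 0 \<Longrightarrow> S \<subseteq> OK d \<Longrightarrow> ideal_gen d S \<subseteq> OK d"
  using ideal_gen_least ideal_OK by blast

lemma ideal_one: 
  assumes I: "is_ideal d I" and o: "1 \<in> I" shows "I = OK d"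
proof
  show "I \<subseteq> OK d" using is_idealD(1)[OF I] .
  show "OK d \<subseteq> I"
  proof
    fix a assume "a \<in> OK d"
    then have "a * 1 \<in> I" using is_idealD(4)[OF I] o by blast
    then show "a \<in> I" by simp
  qed
qed

definition pset :: "nat \<Rightarrow> complex \<Rightarrow> complex set" where
  "pset d c = {c * x | x. x \<in> OK d}"

lemma principal_pset: "principal d I \<longleftrightarrow> (\<exists>a\<in>OK d. I = pset d a)"
  by (simp add: principal_def pset_def)

lemma pset_ideal: 
  assumes d: "d > 0" and c: "c \<in> OK d" shows "is_ideal d (pset d c)"
proof -
  have 1: "pset d c \<subseteq> OK d" unfolding pset_def using c OK_mult[OF d] by blast
  have 2: "0 \<in> pset d c" unfolding pset_def by (rule CollectI, rule exI[of _ 0]) simp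
  have 3: "\<forall>x\<in>pset d c. \<forall>y\<in>pset d c. x + y \<in> pset d c"
  proof (intro ballI)
    fix x y assume "x \<in> pset d c" "y \<in> pset d c"
    then obtain u v where "x = c * u" "y = c * v" "u \<in> OK d" "v \<in> OK d" unfolding pset_def by blast
    then have "x + y = c * (u + v)" "u + v \<in> OK d" using OK_add[OF d] by (auto simp: distrib_left)
    then show "x + y \<in> pset d c" unfolding pset_def by blast
  qed
  have 4: "\<forall>a\<in>OK d. \<forall>x\<in>pset d c. a * x \<in> pset d c"
  proof (intro ballI)
    fix a x assume "a \<in> OK d" "x \<in> pset d c"
    then obtain u where "x = c * u" "u \<in> OK d" "a \<in> OK d" unfolding pset_def by blast
    then have "a * x = c * (a * u)" "a * u \<in> OK d" using OK_mult[OF d] by (auto simp: algebra_simps)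
    then show "a * x \<in> pset d c" unfolding pset_def by blast
  qed
  show ?thesis using 1 2 3 4 unfolding is_ideal_def by blast
qed

lemma pset_mem: "x \<in> OK d \<Longrightarrow> c * x \<in> pset d c"
  unfolding pset_def by blast

lemma pset_self: "c \<in> pset d c"
  using pset_mem[of 1 d c] by simp

lemma products_OK:
  "d > 0 \<Longrightarrow> I \<subseteq> OK d \<Longrightarrow> J \<subseteq> OK d \<Longrightarrow> {x * y | x y. x \<in> I \<and> y \<in> J} \<subseteq> OK d"
  by (auto intro: OK_mult)

lemma ideal_mult_ideal:
  "d > 0 \<Longrightarrow> I \<subseteq> OK d \<Longrightarrow> J \<subseteq> OK d \<Longrightarrow> is_ideal d (ideal_mult d I J)"
  unfolding ideal_mult_def by (intro ideal_gen_ideal products_OK)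

lemma ideal_mult_mem: "x \<in> I \<Longrightarrow> y \<in> J \<Longrightarrow> x * y \<in> ideal_mult d I J"
  unfolding ideal_mult_def by (rule subsetD[OF ideal_gen_sup]) blast

lemma ideal_mult_least:
  "is_ideal d K \<Longrightarrow> (\<And>x y. x \<in> I \<Longrightarrow> y \<in> J \<Longrightarrow> x * y \<in> K) \<Longrightarrow> ideal_mult d I J \<subseteq> K"
  unfolding ideal_mult_def by (rule ideal_gen_least) auto

lemma conj_ideal_mem: "x \<in> conj_ideal I \<longleftrightarrow> cnj x \<in> I"
proof
  assume "x \<in> conj_ideal I"
  then obtain y where "y \<in> I" "x = cnj y" unfolding conj_ideal_def by blast
  then show "cnj x \<in> I" by simp
next
  assume "cnj x \<in> I"
  then have "cnj (cnj x) \<in> cnj ` I" by (rule imageI)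
  then show "x \<in> conj_ideal I" unfolding conj_ideal_def by simp
qed

lemma conj_ideal_ideal:
  assumes I: "is_ideal d I" shows "is_ideal d (conj_ideal I)"
proof -
  have 1: "conj_ideal I \<subseteq> OK d"
  proof
    fix x assume "x \<in> conj_ideal I"
    then have "cnj x \<in> OK d" using conj_ideal_mem is_idealD(1)[OF I] by blast
    then show "x \<in> OK d" using OK_cnj[of "cnj x" d] by simp
  qed
  have 2: "0 \<in> conj_ideal I" using conj_ideal_mem is_idealD(2)[OF I] by simp
  have 3: "\<forall>x\<in>conj_ideal I. \<forall>y\<in>conj_ideal I. x + y \<in> conj_ideal I"
    using is_idealD(3)[OF I] by (simp add: conj_ideal_mem)
  have 4: "\<forall>a\<in>OK d. \<forall>x\<in>conj_ideal I. a * x \<in> conj_ideal I"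
    using is_idealD(4)[OF I] OK_cnj by (simp add: conj_ideal_mem)
  show ?thesis using 1 2 3 4 unfolding is_ideal_def by blast
qed

lemma pi_z_ideal: 
  assumes d: "d > 0" shows "is_ideal d (pi_z d z)"
proof -
  have 1: "pi_z d z \<subseteq> OK d" unfolding pi_z_def by blast
  have 2: "0 \<in> pi_z d z" unfolding pi_z_def by simp
  have 3: "\<forall>x\<in>pi_z d z. \<forall>y\<in>pi_z d z. x + y \<in> pi_z d z"
  proof (intro ballI)
    fix x y assume "x \<in> pi_z d z" "y \<in> pi_z d z"
    then have "x \<in> OK d" "y \<in> OK d" "x * z \<in> OK d" "y * z \<in> OK d" unfolding pi_z_def by auto
    then have "x + y \<in> OK d" "(x + y) * z \<in> OK d" using OK_add[OF d] by (auto simp: distrib_right)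
    then show "x + y \<in> pi_z d z" unfolding pi_z_def by blast
  qed
  have 4: "\<forall>a\<in>OK d. \<forall>x\<in>pi_z d z. a * x \<in> pi_z d z"
  proof (intro ballI)
    fix a x assume "a \<in> OK d" "x \<in> pi_z d z"
    then have "a \<in> OK d" "x \<in> OK d" "x * z \<in> OK d" unfolding pi_z_def by auto
    then have "a * x \<in> OK d" "(a * x) * z \<in> OK d" using OK_mult[OF d] by (auto simp: mult.assoc)
    then show "a * x \<in> pi_z d z" unfolding pi_z_def by blast
  qed
  show ?thesis using 1 2 3 4 unfolding is_ideal_def by blast
qed

lemma sum_ideal:
  assumes d: "d > 0" and I: "is_ideal d I" and J: "is_ideal d J"
  shows "is_ideal d {x + y | x y. x \<in> I \<and> y \<in> J}"
proof -
  let ?S = "{x + y | x y. x \<in> I \<and> y \<in> J}"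
  have mem: "x + y \<in> ?S" if "x \<in> I" "y \<in> J" for x y using that by blast
  have 1: "?S \<subseteq> OK d"
  proof
    fix u assume "u \<in> ?S"
    then obtain x y where "u = x + y" "x \<in> I" "y \<in> J" by blast
    then show "u \<in> OK d" using OK_add[OF d] ideal_sub[OF I] ideal_sub[OF J] by simp
  qed
  have 2: "0 \<in> ?S" using mem[OF is_idealD(2)[OF I] is_idealD(2)[OF J]] by simp
  have 3: "\<forall>u\<in>?S. \<forall>v\<in>?S. u + v \<in> ?S"
  proof (intro ballI)
    fix u v assume "u \<in> ?S" "v \<in> ?S"
    then obtain x y x' y' where h: "u = x + y" "v = x' + y'" "x \<in> I" "y \<in> J" "x' \<in> I" "y' \<in> J" by blast
    have "u + v = (x + x') + (y + y')" using h by simp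
    moreover have "x + x' \<in> I" "y + y' \<in> J" using h is_idealD(3)[OF I] is_idealD(3)[OF J] by auto
    ultimately show "u + v \<in> ?S" using mem by simp
  qed
  have 4: "\<forall>a\<in>OK d. \<forall>u\<in>?S. a * u \<in> ?S"
  proof (intro ballI)
    fix a u assume a: "a \<in> OK d" and "u \<in> ?S"
    then obtain x y where h: "u = x + y" "x \<in> I" "y \<in> J" by blast
    have "a * u = a * x + a * y" using h by (simp add: distrib_left)
    moreover have "a * x \<in> I" "a * y \<in> J" using h a is_idealD(4)[OF I] is_idealD(4)[OF J] by auto
    ultimately show "a * u \<in> ?S" using mem by simp
  qed
  show ?thesis using 1 2 3 4 unfolding is_ideal_def by blast
qed

lemma ideal_mult_sub: "d > 0 \<Longrightarrow> is_ideal d I \<Longrightarrow> is_ideal d J \<Longrightarrow> is_ideal d (ideal_mult d I J)"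
  by (intro ideal_mult_ideal) (auto dest: ideal_sub)

lemma OK_int_of: "d > 0 \<Longrightarrow> x \<in> OK d \<Longrightarrow> x \<in> \<real> \<Longrightarrow> \<exists>k. x = of_int k"
  using OK_real_int by (blast elim: Ints_cases)

lemma add_cnj_real: "z + cnj z \<in> \<real>"
  by (simp add: complex_is_Real_iff)

lemma CL:
  assumes d: "d > 0" and L: "is_ideal d L" and nz: "L \<noteq> {0}"
  shows "\<exists>n::nat. n > 0 \<and> (\<forall>x\<in>L. \<forall>y\<in>L. x * cnj y / of_nat n \<in> OK d)
          \<and> of_nat n \<in> ideal_mult d L (conj_ideal L)
          \<and> ideal_mult d L (conj_ideal L) = pset d (of_nat n)"
proof -
  define J where "J = ideal_mult d L (conj_ideal L)"
  have J: "is_ideal d J" unfolding J_def using d L conj_ideal_ideal[OF L] by (rule ideal_mult_sub)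
  have prodJ: "x * cnj y \<in> J" if "x \<in> L" "y \<in> L" for x y
    unfolding J_def using that by (intro ideal_mult_mem) (simp_all add: conj_ideal_mem)
  have intJ: "\<exists>k. z = of_int k" if "z \<in> J" "z \<in> \<real>" for z
    using OK_int_of[OF d] ideal_sub[OF J] that by blast
  obtain x0 where x0: "x0 \<in> L" "x0 \<noteq> 0" using nz is_idealD(2)[OF L] by blast
  obtain k0 where k0: "x0 * cnj x0 = of_int k0"
    using intJ[OF prodJ[OF x0(1) x0(1)] cnj_mult_real] by blast
  have "complex_of_real ((cmod x0)\<^sup>2) = complex_of_real (of_int k0)"
    by (simp only: complex_norm_square k0 of_real_of_int_eq)
  then have "real_of_int k0 = (cmod x0)\<^sup>2" using of_real_eq_iff by metis
  moreover have "cmod x0 > 0" using x0(2) by simp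
  ultimately have k0pos: "k0 > 0" by (smt (verit) of_int_le_0_iff zero_less_power)
  define P where "P = (\<lambda>k::nat. k > 0 \<and> of_nat k \<in> J)"
  have Pk0: "P (nat k0)" unfolding P_def using k0pos k0 prodJ[OF x0(1) x0(1)] by simp
  define n where "n = (LEAST k. P k)"
  have Pn: "P n" unfolding n_def using Pk0 by (rule LeastI)
  then have npos: "n > 0" and nJ: "of_nat n \<in> J" unfolding P_def by auto
  have div: "int n dvd k" if "of_int k \<in> J" for k
  proof -
    define r where "r = k mod int n"
    have r: "0 \<le> r" "r < int n" using npos by (simp_all add: r_def)
    have "r = k - (k div int n) * int n" by (simp add: r_def mod_div_mult_eq minus_div_mult_eq_mod)
    then have "of_int r = of_int k - of_int (k div int n) * (of_nat n :: complex)" by simp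
    also have "\<dots> \<in> J" using that nJ ideal_int[OF J] ideal_diff[OF J] by simp
    finally have rJ: "of_int r \<in> J" .
    show ?thesis
    proof (rule ccontr)
      assume "\<not> int n dvd k"
      then have "r > 0" using r by (auto simp: r_def dvd_eq_mod_eq_0)
      then have "P (nat r)" unfolding P_def using rJ by simp
      then have "n \<le> nat r" unfolding n_def by (rule Least_le)
      then show False using r by simp
    qed
  qed
  have inOK: "x * cnj y / of_nat n \<in> OK d" if xy: "x \<in> L" "y \<in> L" for x y
  proof -
    define w where "w = x * cnj y / of_nat n"
    have xq: "x \<in> QF d" "y \<in> QF d" using xy ideal_sub[OF L] OK_QF by blast+
    have e: "w = complex_of_real (1 / real n) * (x * cnj y)" by (simp add: w_def)
    have "x * cnj y \<in> QF d" using xq qf_mult qf_cnj by blast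
    moreover have "1 / real n \<in> \<rat>" by simp
    ultimately have "complex_of_real (1 / real n) * (x * cnj y) \<in> QF d" using qf_scale_rat by blast
    then have wq: "w \<in> QF d" by (simp only: e)
    have "x * cnj y + y * cnj x \<in> J" using prodJ xy is_idealD(3)[OF J] by blast
    moreover have "x * cnj y + y * cnj x = (x * cnj y) + cnj (x * cnj y)" by simp
    ultimately obtain t where t: "x * cnj y + y * cnj x = of_int t"
      using intJ add_cnj_real by metis
    have "int n dvd t" using div t \<open>x * cnj y + y * cnj x \<in> J\<close> by simp
    then obtain t' where t': "t = int n * t'" by (elim dvdE)
    have "w + cnj w = (x * cnj y + y * cnj x) / of_nat n" by (simp add: w_def add_divide_distrib mult.commute)
    also have "\<dots> = of_int t'" using t t' npos by simp
    finally have tr: "w + cnj w \<in> \<int>" by simp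
    obtain a where a: "x * cnj x = of_int a" using intJ[OF prodJ[OF xy(1) xy(1)] cnj_mult_real] by blast
    obtain b where b: "y * cnj y = of_int b" using intJ[OF prodJ[OF xy(2) xy(2)] cnj_mult_real] by blast
    have "int n dvd a" using div a prodJ[OF xy(1) xy(1)] by simp
    then obtain a' where a': "a = int n * a'" by (elim dvdE)
    have "int n dvd b" using div b prodJ[OF xy(2) xy(2)] by simp
    then obtain b' where b': "b = int n * b'" by (elim dvdE)
    have "w * cnj w = (x * cnj x) * (y * cnj y) / (of_nat n * of_nat n)"
      by (simp add: w_def algebra_simps)
    also have "\<dots> = of_int (a' * b')" using a b a' b' npos by simp
    finally have nm: "w * cnj w \<in> \<int>" by simp
    show ?thesis using OK_iff[OF d] wq tr nm unfolding w_def by blast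
  qed
  have nOK: "(of_nat n :: complex) \<in> OK d" by simp
  have "J \<subseteq> pset d (of_nat n)"
    unfolding J_def
  proof (rule ideal_mult_least[OF pset_ideal[OF d nOK]])
    fix x v assume "x \<in> L" "v \<in> conj_ideal L"
    then have "cnj v \<in> L" by (simp add: conj_ideal_mem)
    then have "x * cnj (cnj v) / of_nat n \<in> OK d" using inOK \<open>x \<in> L\<close> by blast
    then have "of_nat n * (x * v / of_nat n) \<in> pset d (of_nat n)" by (intro pset_mem) simp
    then show "x * v \<in> pset d (of_nat n)" using npos by simp
  qed
  moreover have "pset d (of_nat n) \<subseteq> J"
  proof
    fix u assume "u \<in> pset d (of_nat n)"
    then obtain a where "u = of_nat n * a" "a \<in> OK d" unfolding pset_def by blast
    then show "u \<in> J" using is_idealD(4)[OF J _ nJ] by (simp add: mult.commute)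
  qed
  ultimately have "J = pset d (of_nat n)" by blast
  then show ?thesis using npos inOK nJ unfolding J_def by blast
qed

lemma root_alg_int:
  assumes "k > 0" "z ^ k = (1::complex)"
  shows "algebraic_int z"
proof -
  define p :: "complex poly" where "p = monom 1 k + [:-1:]"
  have "poly p z = 0" using assms by (simp add: p_def poly_monom)
  moreover have "degree p = k" using assms(1) unfolding p_def
    by (subst degree_add_eq_left) (simp_all add: degree_monom_eq)
  then have "lead_coeff p = 1" using assms(1) by (cases k) (simp_all add: p_def coeff_monom)
  moreover have "\<forall>i. coeff p i \<in> \<int>" by (simp add: p_def coeff_monom coeff_pCons split: nat.splits)
  ultimately show ?thesis by (intro algebraic_int.intros)
qed

lemma root_OK:
  assumes "z \<in> roots_unity d" shows "z \<in> OK d"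
  using assms root_alg_int unfolding roots_unity_def OK_def by blast

lemma norm_half:
  "((of_int A + of_int B * rr d) / 2) * cnj ((of_int A + of_int B * rr d) / 2)
     = of_int (A ^ 2 + int d * B ^ 2) / 4"
proof -
  have "((of_int A + of_int B * rr d) / 2) * cnj ((of_int A + of_int B * rr d) / 2)
     = (of_int A * of_int A - of_int B * of_int B * (rr d * rr d)) / 4"
    by (simp add: field_simps)
  also have "\<dots> = of_int (A ^ 2 + int d * B ^ 2) / 4" by (simp add: rr_sq power2_eq_square)
  finally show ?thesis .
qed

lemma OK_power: "d > 0 \<Longrightarrow> z \<in> OK d \<Longrightarrow> z ^ k \<in> OK d"
  by (induction k) (auto intro: OK_mult)

lemma norm1_root:
  assumes d: "d > 0" "squarefree d" and z: "z \<in> OK d" "z * cnj z = 1"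
  shows "\<exists>k>0. z ^ k = 1"
proof -
  define S where "S = {w \<in> OK d. w * cnj w = 1}"
  define f where "f = (\<lambda>(A::int, B::int). (of_int A + of_int B * rr d) / (2::complex))"
  have "S \<subseteq> f ` ({-2..2} \<times> {-2..2})"
  proof
    fix w assume "w \<in> S"
    then have w: "w \<in> OK d" "w * cnj w = 1" by (auto simp: S_def)
    obtain A B where AB: "w = (of_int A + of_int B * rr d) / 2" using OK_half[OF d w(1)] by blast
    have "of_int (A ^ 2 + int d * B ^ 2) / 4 = (1::complex)" using w(2) AB norm_half by metis
    then have "complex_of_int (A ^ 2 + int d * B ^ 2) = of_int 4" by (simp add: divide_eq_1_iff)
    then have e: "A ^ 2 + int d * B ^ 2 = 4" using of_int_eq_iff by blast
    have "B ^ 2 \<le> int d * B ^ 2" using d(1) by (simp add: mult_le_cancel_right1)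
    then have "A ^ 2 \<le> 2 ^ 2" "B ^ 2 \<le> 2 ^ 2" using e by (simp_all add: add_nonneg_eq_0_iff) (smt (verit) zero_le_power2)+
    then have "\<bar>A\<bar> \<le> 2" "\<bar>B\<bar> \<le> 2" using abs_le_square_iff[of A 2] abs_le_square_iff[of B 2] by simp_all
    then have "(A, B) \<in> {-2..2} \<times> {-2..2}" by auto
    then show "w \<in> f ` ({-2..2} \<times> {-2..2})" using AB unfolding f_def by force
  qed
  then have fin: "finite S" by (rule finite_subset) simp
  have pw: "z ^ k \<in> S" for k
    using OK_power[OF d(1) z(1)] z(2) by (simp add: S_def flip: power_mult_distrib)
  have "\<not> inj (\<lambda>k::nat. z ^ k)"
  proof
    assume "inj (\<lambda>k::nat. z ^ k)"
    moreover have "finite (range (\<lambda>k::nat. z ^ k))" using fin pw by (metis finite_subset image_subsetI)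
    ultimately have "finite (UNIV :: nat set)" using finite_imageD by blast
    then show False by simp
  qed
  then obtain i j :: nat where ij: "i \<noteq> j" "z ^ i = z ^ j" unfolding inj_def by blast
  have z0: "z \<noteq> 0" using z(2) by auto
  have "\<exists>a b::nat. a < b \<and> z ^ a = z ^ b" using ij by (metis linorder_neqE_nat)
  then obtain a b :: nat where ab: "a < b" "z ^ a = z ^ b" by blast
  have "z ^ b = z ^ a * z ^ (b - a)" using ab(1) by (simp flip: power_add)
  then have "z ^ (b - a) = 1" using ab(2) z0 by simp
  then show ?thesis using ab(1) by (intro exI[of _ "b - a"]) simp
qed

lemma zr_OK: "d > 0 \<Longrightarrow> inZR d x \<Longrightarrow> x \<in> OK d"
proof -
  assume d: "d > 0" and x: "inZR d x"
  then obtain A B where AB: "x = of_int A + of_int B * rr d" unfolding inZR_def by blast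
  have "x + cnj x = of_int (2 * A)" using AB by simp
  then have "x + cnj x \<in> \<int>" by simp
  then show ?thesis using OK_iff[OF d] zr_QF[OF x] zr_norm[OF x] by blast
qed

lemma denom_OK:
  assumes d: "d > 0" and z: "z \<in> QF d"
  shows "\<exists>m::nat. m > 0 \<and> of_nat m * z \<in> OK d"
proof -
  obtain D :: int where D: "D > 0" "inZR d (of_int D * z)" using qf_denom[OF z] by blast
  have "of_nat (nat D) * z \<in> OK d" using zr_OK[OF d D(2)] D(1) by simp
  then show ?thesis using D(1) by (intro exI[of _ "nat D"]) simp
qed

lemma conj_pi_z: "conj_ideal (pi_z d z) = pi_z d (cnj z)"
proof -
  have "x \<in> conj_ideal (pi_z d z) \<longleftrightarrow> x \<in> pi_z d (cnj z)" for x
  proof -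
    have "x \<in> conj_ideal (pi_z d z) \<longleftrightarrow> cnj x \<in> OK d \<and> cnj x * z \<in> OK d"
      by (simp add: conj_ideal_mem pi_z_def)
    also have "\<dots> \<longleftrightarrow> x \<in> OK d \<and> x * cnj z \<in> OK d"
      using OK_cnj[of "cnj x" d] OK_cnj[of x d] OK_cnj[of "cnj x * z" d] OK_cnj[of "x * cnj z" d]
      by auto
    finally show ?thesis by (simp add: pi_z_def)
  qed
  then show ?thesis by blast
qed

lemma partA:
  assumes d: "d > 0" "squarefree d" and zK: "z \<in> K1 d - roots_unity d"
  shows "pi_z d z \<in> JJ d"
proof -
  define I where "I = pi_z d z"
  have zq: "z \<in> QF d" and zn: "z * cnj z = 1" and zr: "z \<notin> roots_unity d"
    using zK by (auto simp: K1_def)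
  have I: "is_ideal d I" unfolding I_def using pi_z_ideal[OF d(1)] .
  have cI: "conj_ideal I = pi_z d (cnj z)" unfolding I_def by (rule conj_pi_z)
  have cI': "is_ideal d (conj_ideal I)" using conj_ideal_ideal[OF I] .
  obtain m :: nat where m: "m > 0" "of_nat m * z \<in> OK d" using denom_OK[OF d(1) zq] by blast
  have mI: "of_nat m \<in> I" unfolding I_def pi_z_def using m by simp
  have nz: "I \<noteq> {0}" using mI m(1) by auto
  have np: "I \<noteq> OK d"
  proof
    assume "I = OK d"
    then have "1 \<in> I" by simp
    then have "z \<in> OK d" unfolding I_def pi_z_def by simp
    then obtain k where "k > 0" "z ^ k = 1" using norm1_root[OF d] zn by blast
    then have "z \<in> roots_unity d" using zq unfolding roots_unity_def by blast
    with zr show False by simp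
  qed
  define A where "A = {x + y | x y. x \<in> I \<and> y \<in> conj_ideal I}"
  have A: "is_ideal d A" unfolding A_def by (rule sum_ideal[OF d(1) I cI'])
  have Amem: "x + y \<in> A" if "x \<in> I" "y \<in> conj_ideal I" for x y using that unfolding A_def by blast
  define L where "L = {x + y | x y. x \<in> pset d (of_nat m) \<and> y \<in> pset d (of_nat m * z)}"
  have L: "is_ideal d L" unfolding L_def
    by (rule sum_ideal[OF d(1) pset_ideal[OF d(1)] pset_ideal[OF d(1) m(2)]]) simp
  have mL: "of_nat m \<in> L" unfolding L_def
    using pset_self[of "of_nat m" d] is_idealD(2)[OF pset_ideal[OF d(1) m(2)]] by force
  have mzL: "of_nat m * z \<in> L" unfolding L_def
    using pset_self[of "of_nat m * z" d] is_idealD(2)[OF pset_ideal[OF d(1) OK_nat[of m d]]] by force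
  have Lnz: "L \<noteq> {0}" using mL m(1) by auto
  obtain n :: nat where n: "n > 0" "\<forall>x\<in>L. \<forall>y\<in>L. x * cnj y / of_nat n \<in> OK d"
    "of_nat n \<in> ideal_mult d L (conj_ideal L)"
    using CL[OF d(1) L Lnz] by blast
  define K where "K = {x. x / of_nat n \<in> A}"
  have K: "is_ideal d K"
  proof -
    have 1: "K \<subseteq> OK d"
    proof
      fix x assume "x \<in> K"
      then have "x / of_nat n \<in> OK d" unfolding K_def using ideal_sub[OF A] by blast
      then have "of_nat n * (x / of_nat n) \<in> OK d" using OK_mult[OF d(1)] OK_nat by blast
      then show "x \<in> OK d" using n(1) by simp
    qed
    have 2: "0 \<in> K" unfolding K_def using is_idealD(2)[OF A] by simp
    have 3: "\<forall>x\<in>K. \<forall>y\<in>K. x + y \<in> K"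
      unfolding K_def using is_idealD(3)[OF A] by (simp add: add_divide_distrib)
    have 4: "\<forall>a\<in>OK d. \<forall>x\<in>K. a * x \<in> K"
    proof (intro ballI)
      fix a x assume "a \<in> OK d" "x \<in> K"
      then have "a * (x / of_nat n) \<in> A" unfolding K_def using is_idealD(4)[OF A] by blast
      then show "a * x \<in> K" unfolding K_def by simp
    qed
    show ?thesis using 1 2 3 4 unfolding is_ideal_def by blast
  qed
  have "ideal_mult d L (conj_ideal L) \<subseteq> K"
  proof (rule ideal_mult_least[OF K])
    fix u v' assume u: "u \<in> L" and v': "v' \<in> conj_ideal L"
    then have v: "cnj v' \<in> L" by (simp add: conj_ideal_mem)
    obtain a b where ab: "u = a + b" "a \<in> pset d (of_nat m)" "b \<in> pset d (of_nat m * z)"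
      using u unfolding L_def by blast
    obtain p q where pq: "a = of_nat m * p" "p \<in> OK d" "b = of_nat m * z * q" "q \<in> OK d"
      using ab unfolding pset_def by blast
    define w1 where "w1 = of_nat m * v' / of_nat n"
    have w1: "w1 \<in> OK d" using n(2) mL v unfolding w1_def by force
    have w1z: "w1 * z \<in> OK d"
    proof -
      have "(of_nat m * z) * cnj (cnj v') / of_nat n \<in> OK d" using n(2) mzL v by blast
      then show ?thesis unfolding w1_def by (simp add: algebra_simps)
    qed
    have w1I: "w1 \<in> I" unfolding I_def pi_z_def using w1 w1z by simp
    have pw: "p * w1 \<in> I" using is_idealD(4)[OF I pq(2) w1I] .
    have qw: "q * w1 \<in> I" using is_idealD(4)[OF I pq(4) w1I] .
    have "z * (q * w1) \<in> conj_ideal I"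
    proof -
      have "q * w1 * z \<in> OK d" using qw unfolding I_def pi_z_def by simp
      moreover have "z * (q * w1) * cnj z = q * w1" using zn by (simp add: algebra_simps)
      moreover have "q * w1 \<in> OK d" using qw ideal_sub[OF I] by blast
      moreover have "z * (q * w1) = q * w1 * z" by simp
      ultimately show ?thesis unfolding cI pi_z_def by (metis (mono_tags, lifting) mem_Collect_eq)
    qed
    moreover have "u * v' / of_nat n = p * w1 + z * (q * w1)"
      unfolding w1_def ab pq by (simp add: algebra_simps add_divide_distrib)
    ultimately have "u * v' / of_nat n \<in> A" using Amem pw by simp
    then show "u * v' \<in> K" unfolding K_def by simp
  qed
  then have "of_nat n \<in> K" using n(3) by blast
  then have "1 \<in> A" unfolding K_def using n(1) by simp
  define G where "G = ideal_gen d (I \<union> conj_ideal I)"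
  have IcI: "I \<union> conj_ideal I \<subseteq> OK d" using ideal_sub[OF I] ideal_sub[OF cI'] by blast
  have G: "is_ideal d G" unfolding G_def by (rule ideal_gen_ideal[OF d(1) IcI])
  have "A \<subseteq> G"
  proof
    fix t assume "t \<in> A"
    then obtain x y where "t = x + y" "x \<in> I" "y \<in> conj_ideal I" unfolding A_def by blast
    moreover have "I \<union> conj_ideal I \<subseteq> G" unfolding G_def by (rule ideal_gen_sup)
    ultimately show "t \<in> G" using is_idealD(3)[OF G] by blast
  qed
  then have "1 \<in> G" using \<open>1 \<in> A\<close> by blast
  then have cop: "G = OK d" using ideal_one[OF G] by blast
  obtain n2 :: nat where n2: "n2 > 0" "\<forall>x\<in>I. \<forall>y\<in>I. x * cnj y / of_nat n2 \<in> OK d"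
    "of_nat n2 \<in> ideal_mult d I (conj_ideal I)"
    using CL[OF d(1) I nz] by blast
  define M where "M = ideal_mult d I I"
  have M: "is_ideal d M" unfolding M_def by (rule ideal_mult_sub[OF d(1) I I])
  define B where "B = {u \<in> OK d. cnj z * u \<in> M}"
  have B: "is_ideal d B"
  proof -
    have 2: "0 \<in> B" unfolding B_def using is_idealD(2)[OF M] by simp
    have 3: "\<forall>x\<in>B. \<forall>y\<in>B. x + y \<in> B"
      unfolding B_def using is_idealD(3)[OF M] OK_add[OF d(1)] by (simp add: distrib_left)
    have 4: "\<forall>a\<in>OK d. \<forall>x\<in>B. a * x \<in> B"
      unfolding B_def using is_idealD(4)[OF M] OK_mult[OF d(1)] by (simp add: mult.left_commute)
    show ?thesis using 2 3 4 unfolding is_ideal_def B_def by blast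
  qed
  have "ideal_mult d I (conj_ideal I) \<subseteq> B"
  proof (rule ideal_mult_least[OF B])
    fix x v assume x: "x \<in> I" and v: "v \<in> conj_ideal I"
    then have vv: "v \<in> OK d" "v * cnj z \<in> OK d" unfolding cI pi_z_def by auto
    have e: "v * cnj z * z = v" using zn by (simp add: algebra_simps)
    have "v * cnj z * z \<in> OK d" using vv(1) by (subst e)
    then have vI: "v * cnj z \<in> I" unfolding I_def pi_z_def using vv by simp
    have "x * (v * cnj z) \<in> M" unfolding M_def using x vI by (rule ideal_mult_mem)
    moreover have "x * v \<in> OK d" using OK_mult[OF d(1)] ideal_sub[OF I x] vv(1) by blast
    ultimately show "x * v \<in> B" unfolding B_def by (simp add: algebra_simps)
  qed
  then have "of_nat n2 \<in> B" using n2(3) by blast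
  then have cM: "cnj z * of_nat n2 \<in> M" unfolding B_def by simp
  define c where "c = cnj z * of_nat n2"
  have cOK: "c \<in> OK d" unfolding c_def using cM ideal_sub[OF M] by blast
  have "M \<subseteq> pset d c"
    unfolding M_def
  proof (rule ideal_mult_least[OF pset_ideal[OF d(1) cOK]])
    fix x y assume x: "x \<in> I" and y: "y \<in> I"
    have yy: "y \<in> OK d" "y * z \<in> OK d" using y unfolding I_def pi_z_def by auto
    have "cnj (y * z) \<in> OK d" using OK_cnj yy(2) by blast
    moreover have e: "cnj (y * z) * z = cnj y" using zn by (simp add: algebra_simps)
    moreover have "cnj (y * z) * z \<in> OK d" using OK_cnj[OF yy(1)] by (subst e)
    ultimately have "cnj (y * z) \<in> I" unfolding I_def pi_z_def by simp
    then have "x * cnj (cnj (y * z)) / of_nat n2 \<in> OK d" using n2(2) x by blast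
    then have "c * (x * y * z / of_nat n2) \<in> pset d c" by (intro pset_mem) (simp add: mult.assoc)
    moreover have "c * (x * y * z / of_nat n2) = x * y"
      unfolding c_def using n2(1) zn by (simp add: field_simps)
    ultimately show "x * y \<in> pset d c" by simp
  qed
  moreover have "pset d c \<subseteq> M"
  proof
    fix u assume "u \<in> pset d c"
    then obtain a where "u = c * a" "a \<in> OK d" unfolding pset_def by blast
    then show "u \<in> M" using is_idealD(4)[OF M _ cM] unfolding c_def by (simp add: mult.commute)
  qed
  ultimately have "M = pset d c" by blast
  then have pr: "principal d (ideal_mult d I I)" unfolding M_def principal_pset using cOK by blast
  show ?thesis unfolding JJ_def using I nz np cop pr unfolding G_def I_def by blast
qed

lemma pset_cnj: "x \<in> pset d (of_nat k) \<Longrightarrow> cnj x \<in> pset d (of_nat k)"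
  unfolding pset_def using OK_cnj by fastforce

lemma ideal_mult_in: "is_ideal d I \<Longrightarrow> ideal_mult d I I \<subseteq> I"
  by (rule ideal_mult_least) (auto intro: is_idealD(4) ideal_sub)

lemma partB:
  assumes d: "d > 0" "squarefree d" and P: "P \<in> JJ d"
  shows "\<exists>z \<in> K1 d - roots_unity d. pi_z d z = P"
proof -
  have I: "is_ideal d P" and nz: "P \<noteq> {0}" and np: "P \<noteq> OK d"
    and cop: "ideal_gen d (P \<union> conj_ideal P) = OK d" and pr: "principal d (ideal_mult d P P)"
    using P by (auto simp: JJ_def)
  obtain \<alpha> where al: "\<alpha> \<in> OK d" "ideal_mult d P P = pset d \<alpha>" using pr principal_pset by blast
  obtain n :: nat where n: "n > 0" "\<forall>x\<in>P. \<forall>y\<in>P. x * cnj y / of_nat n \<in> OK d"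
    "of_nat n \<in> ideal_mult d P (conj_ideal P)"
    using CL[OF d(1) I nz] by blast
  have cI': "is_ideal d (conj_ideal P)" using conj_ideal_ideal[OF I] .
  have prodP: "x * y \<in> pset d \<alpha>" if "x \<in> P" "y \<in> P" for x y
    using ideal_mult_mem[OF that, of d] al(2) by simp
  have alP: "\<alpha> \<in> P" using pset_self[of \<alpha> d] al(2) ideal_mult_in[OF I] by blast
  have nP: "of_nat n \<in> P"
  proof -
    have "ideal_mult d P (conj_ideal P) \<subseteq> P"
    proof (rule ideal_mult_least[OF I])
      fix x y assume "x \<in> P" "y \<in> conj_ideal P"
      then have "y * x \<in> P" using is_idealD(4)[OF I] ideal_sub[OF cI'] by blast
      then show "x * y \<in> P" by (simp add: mult.commute)
    qed
    then show ?thesis using n(3) by blast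
  qed
  have nn: "x * cnj y \<in> pset d (of_nat n)" if "x \<in> P" "y \<in> P" for x y
  proof -
    have "of_nat n * (x * cnj y / of_nat n) \<in> pset d (of_nat n)" using n(2) that by (intro pset_mem) blast
    then show ?thesis using n(1) by simp
  qed
  have pset_mult: "u * v \<in> pset d (a * b)" if uv: "u \<in> pset d a" "v \<in> pset d b" for u v a b
  proof -
    obtain s t where "u = a * s" "s \<in> OK d" "v = b * t" "t \<in> OK d" using uv unfolding pset_def by blast
    then have "u * v = (a * b) * (s * t)" "s * t \<in> OK d" using OK_mult[OF d(1)] by (auto simp: algebra_simps)
    then show ?thesis unfolding pset_def by blast
  qed
  define n2 where "n2 = (of_nat (n * n) :: complex)"
  have "\<alpha> * cnj \<alpha> \<in> pset d n2"
  proof -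
    define B where "B = {t \<in> OK d. t * cnj \<alpha> \<in> pset d n2}"
    have B: "is_ideal d B"
    proof -
      have Pn: "is_ideal d (pset d n2)" unfolding n2_def by (rule pset_ideal[OF d(1) OK_nat])
      have 2: "0 \<in> B" unfolding B_def using is_idealD(2)[OF Pn] by simp
      have 3: "\<forall>x\<in>B. \<forall>y\<in>B. x + y \<in> B"
        unfolding B_def using is_idealD(3)[OF Pn] OK_add[OF d(1)] by (simp add: distrib_right)
      have 4: "\<forall>a\<in>OK d. \<forall>x\<in>B. a * x \<in> B"
        unfolding B_def using is_idealD(4)[OF Pn] OK_mult[OF d(1)] by (simp add: mult.assoc)
      show ?thesis using 2 3 4 unfolding is_ideal_def B_def by blast
    qed
    have "ideal_mult d P P \<subseteq> B"
    proof (rule ideal_mult_least[OF B])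
      fix x y assume x: "x \<in> P" and y: "y \<in> P"
      define Bx where "Bx = {s \<in> OK d. cnj x * cnj y * s \<in> pset d n2}"
      have Bx: "is_ideal d Bx"
      proof -
        have Pn: "is_ideal d (pset d n2)" unfolding n2_def by (rule pset_ideal[OF d(1) OK_nat])
        have 2: "0 \<in> Bx" unfolding Bx_def using is_idealD(2)[OF Pn] by simp
        have 3: "\<forall>u\<in>Bx. \<forall>v\<in>Bx. u + v \<in> Bx"
          unfolding Bx_def using is_idealD(3)[OF Pn] OK_add[OF d(1)] by (simp add: distrib_left)
        have 4: "\<forall>a\<in>OK d. \<forall>u\<in>Bx. a * u \<in> Bx"
          unfolding Bx_def using is_idealD(4)[OF Pn] OK_mult[OF d(1)] by (simp add: mult.left_commute)
        show ?thesis using 2 3 4 unfolding is_ideal_def Bx_def by blast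
      qed
      have "ideal_mult d P P \<subseteq> Bx"
      proof (rule ideal_mult_least[OF Bx])
        fix x' y' assume x': "x' \<in> P" and y': "y' \<in> P"
        have "(x' * cnj x) * (y' * cnj y) \<in> pset d (of_nat n * of_nat n)"
          using nn[OF x' x] nn[OF y' y] by (rule pset_mult)
        moreover have "(x' * cnj x) * (y' * cnj y) = cnj x * cnj y * (x' * y')" by simp
        moreover have "x' * y' \<in> OK d" using OK_mult[OF d(1)] ideal_sub[OF I] x' y' by blast
        ultimately show "x' * y' \<in> Bx" unfolding Bx_def n2_def by simp
      qed
      then have "\<alpha> \<in> Bx" using pset_self[of \<alpha> d] al(2) by blast
      then have "cnj x * cnj y * \<alpha> \<in> pset d n2" unfolding Bx_def by simp
      then have "cnj (cnj x * cnj y * \<alpha>) \<in> pset d n2" unfolding n2_def by (rule pset_cnj)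
      moreover have "x * y \<in> OK d" using OK_mult[OF d(1)] ideal_sub[OF I] x y by blast
      ultimately show "x * y \<in> B" unfolding B_def by simp
    qed
    then have "\<alpha> \<in> B" using pset_self[of \<alpha> d] al(2) by blast
    then show ?thesis unfolding B_def by simp
  qed
  then obtain u where u: "\<alpha> * cnj \<alpha> = n2 * u" "u \<in> OK d" unfolding pset_def by blast
  define aa where "aa = \<alpha> * cnj \<alpha>"
  have aaOK: "aa \<in> OK d" unfolding aa_def using OK_mult[OF d(1) al(1) OK_cnj[OF al(1)]] .
  have Pa: "is_ideal d (pset d aa)" by (rule pset_ideal[OF d(1) aaOK])
  have "of_nat n * of_nat n \<in> pset d aa"
  proof -
    define B where "B = {t \<in> OK d. t * of_nat n \<in> pset d aa}"
    have B: "is_ideal d B"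
    proof -
      have 2: "0 \<in> B" unfolding B_def using is_idealD(2)[OF Pa] by simp
      have 3: "\<forall>x\<in>B. \<forall>y\<in>B. x + y \<in> B"
        unfolding B_def using is_idealD(3)[OF Pa] OK_add[OF d(1)] by (simp add: distrib_right)
      have 4: "\<forall>a\<in>OK d. \<forall>x\<in>B. a * x \<in> B"
        unfolding B_def using is_idealD(4)[OF Pa] OK_mult[OF d(1)] by (simp add: mult.assoc)
      show ?thesis using 2 3 4 unfolding is_ideal_def B_def by blast
    qed
    have "ideal_mult d P (conj_ideal P) \<subseteq> B"
    proof (rule ideal_mult_least[OF B])
      fix x v assume x: "x \<in> P" and v: "v \<in> conj_ideal P"
      then have y: "cnj v \<in> P" by (simp add: conj_ideal_mem)
      define Bx where "Bx = {s \<in> OK d. x * v * s \<in> pset d aa}"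
      have Bx: "is_ideal d Bx"
      proof -
        have 2: "0 \<in> Bx" unfolding Bx_def using is_idealD(2)[OF Pa] by simp
        have 3: "\<forall>a\<in>Bx. \<forall>b\<in>Bx. a + b \<in> Bx"
          unfolding Bx_def using is_idealD(3)[OF Pa] OK_add[OF d(1)] by (simp add: distrib_left)
        have 4: "\<forall>a\<in>OK d. \<forall>b\<in>Bx. a * b \<in> Bx"
          unfolding Bx_def using is_idealD(4)[OF Pa] OK_mult[OF d(1)] by (simp add: mult.left_commute)
        show ?thesis using 2 3 4 unfolding is_ideal_def Bx_def by blast
      qed
      have "ideal_mult d P (conj_ideal P) \<subseteq> Bx"
      proof (rule ideal_mult_least[OF Bx])
        fix x' v' assume x': "x' \<in> P" and v': "v' \<in> conj_ideal P"
        then have y': "cnj v' \<in> P" by (simp add: conj_ideal_mem)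
        have "x * x' \<in> pset d \<alpha>" using prodP[OF x x'] .
        moreover have "cnj (cnj v * cnj v') \<in> pset d (cnj \<alpha>)"
        proof -
          obtain t where "cnj v * cnj v' = \<alpha> * t" "t \<in> OK d" using prodP[OF y y'] unfolding pset_def by blast
          then have "cnj (cnj v * cnj v') = cnj \<alpha> * cnj t" "cnj t \<in> OK d" using OK_cnj by auto
          then show ?thesis unfolding pset_def by blast
        qed
        ultimately have m1: "(x * x') * cnj (cnj v * cnj v') \<in> pset d aa" unfolding aa_def by (rule pset_mult)
        have eq: "(x * x') * cnj (cnj v * cnj v') = x * v * (x' * v')" by (simp add: algebra_simps)
        have "x * v * (x' * v') \<in> pset d aa" using m1 unfolding eq .
        moreover have "x' * v' \<in> OK d" using OK_mult[OF d(1)] ideal_sub[OF I x'] ideal_sub[OF cI' v'] by blast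
        ultimately show "x' * v' \<in> Bx" unfolding Bx_def by simp
      qed
      then have "of_nat n \<in> Bx" using n(3) by blast
      moreover have "x * v \<in> OK d" using OK_mult[OF d(1)] ideal_sub[OF I x] ideal_sub[OF cI' v] by blast
      ultimately show "x * v \<in> B" unfolding Bx_def B_def by simp
    qed
    then have "of_nat n \<in> B" using n(3) by blast
    then show ?thesis unfolding B_def by simp
  qed
  then obtain v where v: "of_nat n * of_nat n = aa * v" "v \<in> OK d" unfolding pset_def by blast
  have nne: "(of_nat n :: complex) \<noteq> 0" using n(1) by simp
  have aa_u: "aa = of_nat n * of_nat n * u" using u(1) unfolding aa_def n2_def by simp
  have uv: "u * v = 1"
  proof -
    have "of_nat n * of_nat n = of_nat n * of_nat n * (u * v)" using v(1) aa_u by (simp add: algebra_simps)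
    then show ?thesis using nne by simp
  qed
  have ureal: "u \<in> \<real>"
  proof -
    have "aa \<in> \<real>" unfolding aa_def by (rule cnj_mult_real)
    then have "of_nat n * of_nat n * u \<in> \<real>" using aa_u by simp
    moreover have "(1 / (of_nat n * of_nat n) :: complex) \<in> \<real>" by simp
    ultimately have "(1 / (of_nat n * of_nat n)) * (of_nat n * of_nat n * u) \<in> \<real>" by (rule Reals_mult[rotated])
    moreover have "(1 / (of_nat n * of_nat n)) * (of_nat n * of_nat n * u) = u" using nne by simp
    ultimately show ?thesis by simp
  qed
  have vreal: "v \<in> \<real>"
  proof -
    have "v = 1 / u" using uv by (metis mult_cancel_left1 nonzero_eq_divide_eq zero_neq_one mult.commute mult_zero_left)
    then show ?thesis using ureal by simp
  qed
  obtain ku where ku: "u = of_int ku" using OK_int_of[OF d(1) u(2) ureal] by blast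
  obtain kv where kv: "v = of_int kv" using OK_int_of[OF d(1) v(2) vreal] by blast
  have "ku * kv = 1" using uv ku kv by (metis of_int_1 of_int_eq_iff of_int_mult)
  then have "ku = 1 \<or> ku = -1" using zmult_eq_1_iff by blast
  moreover have "ku \<noteq> -1"
  proof
    assume "ku = -1"
    then have "aa = - (of_nat n * of_nat n)" using aa_u ku by simp
    moreover have "Re aa \<ge> 0" unfolding aa_def by (simp add: complex_mult_cnj)
    ultimately have "real n * real n \<le> 0" by simp
    moreover have "real n * real n > 0" using n(1) by simp
    ultimately show False by linarith
  qed
  ultimately have aan: "\<alpha> * cnj \<alpha> = of_nat n * of_nat n" using aa_u ku unfolding aa_def by simp
  define z where "z = cnj \<alpha> / of_nat n"
  have zq: "z \<in> QF d"
  proof -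
    have "z = complex_of_real (1 / real n) * cnj \<alpha>" by (simp add: z_def)
    moreover have "cnj \<alpha> \<in> QF d" using OK_QF[OF OK_cnj[OF al(1)]] .
    ultimately show ?thesis using qf_scale_rat[of "1 / real n" "cnj \<alpha>" d] by simp
  qed
  have zn: "z * cnj z = 1" unfolding z_def using aan nne by (simp add: field_simps mult.commute)
  have piP: "pi_z d z = P"
  proof
    show "P \<subseteq> pi_z d z"
    proof
      fix a assume a: "a \<in> P"
      have "a * cnj \<alpha> / of_nat n \<in> OK d" using n(2) a alP by blast
      then show "a \<in> pi_z d z" unfolding pi_z_def z_def using ideal_sub[OF I a] by simp
    qed
  next
    show "pi_z d z \<subseteq> P"
    proof
      fix a assume "a \<in> pi_z d z"
      then have a: "a \<in> OK d" "a * cnj \<alpha> / of_nat n \<in> OK d" unfolding pi_z_def z_def by auto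
      define S where "S = {x + y | x y. x \<in> P \<and> y \<in> conj_ideal P}"
      have S: "is_ideal d S" unfolding S_def by (rule sum_ideal[OF d(1) I cI'])
      have "P \<union> conj_ideal P \<subseteq> S"
      proof
        fix t assume "t \<in> P \<union> conj_ideal P"
        then show "t \<in> S"
        proof
          assume "t \<in> P" then have "t + 0 \<in> S" unfolding S_def using is_idealD(2)[OF cI'] by blast
          then show ?thesis by simp
        next
          assume "t \<in> conj_ideal P" then have "0 + t \<in> S" unfolding S_def using is_idealD(2)[OF I] by blast
          then show ?thesis by simp
        qed
      qed
      then have "ideal_gen d (P \<union> conj_ideal P) \<subseteq> S" by (rule ideal_gen_least[OF S])
      then have "1 \<in> S" using cop by auto
      then obtain p q' where pq: "1 = p + q'" "p \<in> P" "q' \<in> conj_ideal P" unfolding S_def by blast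
      have q: "cnj q' \<in> P" using pq(3) by (simp add: conj_ideal_mem)
      have q'OK: "q' \<in> OK d" using ideal_sub[OF cI' pq(3)] .
      obtain c where c: "cnj q' * cnj q' = \<alpha> * c" "c \<in> OK d" using prodP[OF q q] unfolding pset_def by blast
      have qq: "q' * q' = cnj \<alpha> * cnj c" using arg_cong[OF c(1), of cnj] by simp
      define w where "w = (a * cnj \<alpha> / of_nat n) * cnj c"
      have e: "a * q' * q' = w * of_nat n"
        unfolding w_def using qq nne by (simp add: field_simps)
      have "w \<in> OK d" unfolding w_def using OK_mult[OF d(1) a(2) OK_cnj[OF c(2)]] .
      then have "w * of_nat n \<in> P" using is_idealD(4)[OF I _ nP] by blast
      then have t1: "a * q' * q' \<in> P" unfolding e .
      have t2: "(a * q') * p \<in> P" using is_idealD(4)[OF I _ pq(2)] OK_mult[OF d(1) a(1) q'OK] by blast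
      have t3: "a * p \<in> P" using is_idealD(4)[OF I a(1) pq(2)] .
      have e1: "p + q' = 1" using pq(1) by simp
      have "a * p + (a * q' * p + a * q' * q') = a * p + a * q' * (p + q')" by (simp add: algebra_simps)
      also have "\<dots> = a * p + a * q'" using e1 by simp
      also have "\<dots> = a * (p + q')" by (simp add: algebra_simps)
      also have "\<dots> = a" using e1 by simp
      finally have ea: "a * p + (a * q' * p + a * q' * q') = a" .
      have "a * p + (a * q' * p + a * q' * q') \<in> P"
        using t1 t2 t3 is_idealD(3)[OF I] by blast
      then show "a \<in> P" using ea by simp
    qed
  qed
  have znr: "z \<notin> roots_unity d"
  proof
    assume "z \<in> roots_unity d"
    then have "z \<in> OK d" by (rule root_OK)
    then have "1 \<in> pi_z d z" unfolding pi_z_def by simp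
    then have "P = OK d" using piP ideal_one[OF I] by simp
    with np show False by simp
  qed
  have "z \<in> K1 d" unfolding K1_def using zq zn by simp
  then show ?thesis using znr piP by blast
qed

lemma pi_z_image: "d > 0 \<Longrightarrow> squarefree d \<Longrightarrow> pi_z d ` (K1 d - roots_unity d) = JJ d"
  using partA partB by blast

lemma F_main: "d > 0 \<Longrightarrow> squarefree d \<Longrightarrow> F d = Inf (ideal_norm d ` JJ d)"
proof -
  assume d: "d > 0" "squarefree d"
  have "dz d ` (K1 d - roots_unity d) = ideal_norm d ` (pi_z d ` (K1 d - roots_unity d))"
    unfolding dz_def image_image by simp
  then show ?thesis unfolding F_def pi_z_image[OF d] by simp
qed

definition coset :: "complex set \<Rightarrow> complex \<Rightarrow> complex set" where
  "coset I x = (\<lambda>y. x + y) ` I"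

lemma ideal_norm_coset: "ideal_norm d I = card (coset I ` OK d)"
  unfolding ideal_norm_def coset_def by simp

lemma coset_eq:
  assumes I: "is_ideal d I" and xy: "x - y \<in> I"
  shows "coset I x = coset I y"
proof -
  have 1: "coset I x \<subseteq> coset I y" if h: "x - y \<in> I" for x y
  proof
    fix u assume "u \<in> coset I x"
    then obtain t where t: "t \<in> I" "u = x + t" unfolding coset_def by blast
    then have "(x - y) + t \<in> I" using is_idealD(3)[OF I h] by blast
    moreover have "u = y + ((x - y) + t)" using t by simp
    ultimately show "u \<in> coset I y" unfolding coset_def by blast
  qed
  have "y - x \<in> I" using ideal_minus[OF I xy] by simp
  then show ?thesis using 1 xy by blast
qed

lemma coset_mem_diff:
  assumes I: "is_ideal d I" and e: "coset I x = coset I y"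
  shows "x - y \<in> I"
proof -
  have "x + 0 \<in> coset I x" unfolding coset_def using is_idealD(2)[OF I] by blast
  then have "x \<in> coset I y" using e by simp
  then obtain t where "t \<in> I" "x = y + t" unfolding coset_def by blast
  then show ?thesis by simp
qed

lemma cosets_finite:
  assumes d: "d > 0" "squarefree d" and I: "is_ideal d I" and m: "m > 0" "of_nat m \<in> I"
  shows "finite (coset I ` OK d)"
proof -
  define g where "g = (\<lambda>(a::int, b::int). coset I ((of_int a + of_int b * rr d) / 2))"
  have "coset I ` OK d \<subseteq> g ` ({0..<2 * int m} \<times> {0..<2 * int m})"
  proof
    fix C assume "C \<in> coset I ` OK d"
    then obtain x where x: "x \<in> OK d" "C = coset I x" by blast
    obtain A B where AB: "x = (of_int A + of_int B * rr d) / 2" using OK_half[OF d x(1)] by blast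
    define M where "M = 2 * int m"
    have Mpos: "M > 0" using m(1) by (simp add: M_def)
    define ra rb where "ra = A mod M" and "rb = B mod M"
    define qa qb where "qa = A div M" and "qb = B div M"
    have A: "A = M * qa + ra" and B: "B = M * qb + rb"
      by (simp_all add: ra_def rb_def qa_def qb_def)
    have "x - (of_int ra + of_int rb * rr d) / 2 = of_nat m * (of_int qa + of_int qb * rr d)"
      unfolding AB using A B by (simp add: M_def field_simps)
    moreover have "of_int qa + of_int qb * rr d \<in> OK d" using zr_OK[OF d(1)] unfolding inZR_def by blast
    moreover have "(of_int qa + of_int qb * rr d) * of_nat m \<in> I"
      using is_idealD(4)[OF I calculation(2) m(2)] .
    ultimately have "x - (of_int ra + of_int rb * rr d) / 2 \<in> I"
      by (simp add: mult.commute)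
    then have "C = g (ra, rb)" unfolding g_def x(2) by (simp add: coset_eq[OF I])
    moreover have "(ra, rb) \<in> {0..<2 * int m} \<times> {0..<2 * int m}"
      using Mpos by (simp add: ra_def rb_def M_def)
    ultimately show "C \<in> g ` ({0..<2 * int m} \<times> {0..<2 * int m})" by blast
  qed
  then show ?thesis by (rule finite_subset) simp
qed

lemma cosets_pigeon:
  assumes I: "is_ideal d I" and fin: "finite (coset I ` OK d)"
  shows "\<exists>j. 1 \<le> j \<and> j \<le> card (coset I ` OK d) \<and> of_nat j \<in> I"
proof -
  define k where "k = card (coset I ` OK d)"
  define f where "f = (\<lambda>j::nat. coset I (of_nat j))"
  have "f ` {0..k} \<subseteq> coset I ` OK d" unfolding f_def by auto
  then have "card (f ` {0..k}) \<le> k" unfolding k_def using fin card_mono by blast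
  then have "card (f ` {0..k}) < card {0..k}" by simp
  then have "\<not> inj_on f {0..k}" using pigeonhole by blast
  then obtain i j where ij: "i \<in> {0..k}" "j \<in> {0..k}" "i \<noteq> j" "f i = f j"
    unfolding inj_on_def by blast
  have "\<exists>a b. a \<in> {0..k} \<and> b \<in> {0..k} \<and> a < b \<and> f a = f b"
    using ij by (metis linorder_neqE_nat)
  then obtain a b where ab: "a \<le> k" "b \<le> k" "a < b" "f a = f b" by auto
  have "of_nat b - of_nat a \<in> I" using coset_mem_diff[OF I] ab(4) unfolding f_def by metis
  then have "of_nat (b - a) \<in> I" using ab(3) by (simp add: of_nat_diff)
  moreover have "1 \<le> b - a" "b - a \<le> k" using ab by auto
  ultimately show ?thesis unfolding k_def by blast
qed

lemma dz_small:
  assumes d: "d > 0" "squarefree d" and z: "z \<in> QF d"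
  shows "\<exists>j. 1 \<le> j \<and> j \<le> dz d z \<and> of_nat j * z \<in> OK d"
proof -
  have I: "is_ideal d (pi_z d z)" by (rule pi_z_ideal[OF d(1)])
  obtain m :: nat where m: "m > 0" "of_nat m * z \<in> OK d" using denom_OK[OF d(1) z] by blast
  have "of_nat m \<in> pi_z d z" unfolding pi_z_def using m by simp
  then have fin: "finite (coset (pi_z d z) ` OK d)" using cosets_finite[OF d I m(1)] by blast
  obtain j where j: "1 \<le> j" "j \<le> card (coset (pi_z d z) ` OK d)" "of_nat j \<in> pi_z d z"
    using cosets_pigeon[OF I fin] by blast
  then show ?thesis unfolding dz_def ideal_norm_coset pi_z_def by auto
qed

lemma lower_bound:
  assumes d: "d > 0" "squarefree d" and z: "z \<in> K1 d - roots_unity d"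
    and j: "j > 0" "of_nat j * z \<in> OK d"
    and dv: "\<And>A B. A ^ 2 + int d * B ^ 2 = 4 * (int j) ^ 2 \<Longrightarrow> int j dvd A \<and> int j dvd B"
  shows False
proof -
  have zq: "z \<in> QF d" and zn: "z * cnj z = 1" and zr: "z \<notin> roots_unity d" using z by (auto simp: K1_def)
  obtain A B where AB: "of_nat j * z = (of_int A + of_int B * rr d) / 2"
    using OK_half[OF d j(2)] by blast
  have "(of_nat j * z) * cnj (of_nat j * z) = of_nat j * of_nat j" using zn by (simp add: algebra_simps)
  then have "of_int (A ^ 2 + int d * B ^ 2) / 4 = (of_nat (j * j) :: complex)" using AB norm_half by simp
  then have "complex_of_int (A ^ 2 + int d * B ^ 2) = of_int (4 * (int j) ^ 2)"
    by (simp add: power2_eq_square field_simps)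
  then have e: "A ^ 2 + int d * B ^ 2 = 4 * (int j) ^ 2" using of_int_eq_iff by blast
  obtain A' B' where A': "A = int j * A'" and B': "B = int j * B'" using dv[OF e] by (auto elim!: dvdE)
  have "(int j) ^ 2 * (A' ^ 2 + int d * B' ^ 2) = (int j) ^ 2 * 4"
    using e unfolding A' B' by (simp add: power_mult_distrib algebra_simps)
  then have e2: "A' ^ 2 + int d * B' ^ 2 = 4" using j(1) by simp
  have zf: "z = (of_int A' + of_int B' * rr d) / 2"
  proof -
    have "of_nat j * z = of_nat j * ((of_int A' + of_int B' * rr d) / 2)"
      unfolding AB A' B' by (simp add: algebra_simps)
    then show ?thesis using j(1) by simp
  qed
  have ok: "(of_int A' + of_int B' * rr d) / 2 \<in> OK d" using half_OK[OF d(1)] e2 by simp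
  from ok have "z \<in> OK d" by (simp only: zf[symmetric])
  then obtain k where "k > 0" "z ^ k = 1" using norm1_root[OF d] zn by blast
  then have "z \<in> roots_unity d" unfolding roots_unity_def using zq by blast
  with zr show False by simp
qed

lemma dio_transfer:
  fixes A B :: int and j d N M :: nat
  assumes e: "A ^ 2 + int d * B ^ 2 = 4 * (int j) ^ 2"
    and tab: "\<forall>a\<in>{..<N}. \<forall>b\<in>{..<M}. a * a + d * b * b = 4 * j * j \<longrightarrow> j dvd a \<and> j dvd b"
    and bN: "4 * j * j < N * N" and bM: "4 * j * j < d * M * M"
  shows "int j dvd A \<and> int j dvd B"
proof -
  define a b where "a = nat \<bar>A\<bar>" and "b = nat \<bar>B\<bar>"
  have ia: "int a * int a = A ^ 2" and ib: "int b * int b = B ^ 2"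
    by (simp_all add: a_def b_def power2_eq_square abs_mult_self_eq)
  have "int (a * a + d * b * b) = int a * int a + int d * (int b * int b)" by (simp add: algebra_simps)
  also have "\<dots> = A ^ 2 + int d * B ^ 2" by (simp only: ia ib)
  also have "\<dots> = int (4 * j * j)" using e by (simp add: power2_eq_square)
  finally have "int (a * a + d * b * b) = int (4 * j * j)" .
  then have e': "a * a + d * b * b = 4 * j * j" by (simp only: of_nat_eq_iff)
  have "a * a < N * N" using e' bN by linarith
  then have aN: "a < N" using mult_less_cancel2 by (metis le_less_trans mult_le_mono not_le)
  have h1: "d * b * b < d * M * M" using e' bM by linarith
  then have h1': "d * (b * b) < d * (M * M)" by (simp only: mult.assoc)
  then have "b * b < M * M" by simp
  then have bM': "b < M" by (metis le_less_trans mult_le_mono not_le)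
  have "j dvd a" "j dvd b" using tab aN bM' e' by blast+
  then have "int j dvd int a" "int j dvd int b" by (simp_all only: int_dvd_int_iff)
  moreover have "int a = \<bar>A\<bar>" "int b = \<bar>B\<bar>" unfolding a_def b_def by simp_all
  ultimately have "int j dvd \<bar>A\<bar>" "int j dvd \<bar>B\<bar>" by simp_all
  then show ?thesis by simp
qed

lemma tab1: "\<forall>j\<in>{..<5::nat}. \<forall>a\<in>{..<9::nat}. \<forall>b\<in>{..<9::nat}. a * a + 1 * b * b = 4 * j * j \<longrightarrow> j dvd a \<and> j dvd b"
  by (simp add: lessThan_nat_numeral lessThan_Suc)

lemma tab3: "\<forall>j\<in>{..<7::nat}. \<forall>a\<in>{..<13::nat}. \<forall>b\<in>{..<7::nat}. a * a + 3 * b * b = 4 * j * j \<longrightarrow> j dvd a \<and> j dvd b"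
  by (simp add: lessThan_nat_numeral lessThan_Suc)

lemma sf1: "squarefree (1::nat)" by simp

lemma sf3: "squarefree (3::nat)"
proof (rule squarefreeI)
  fix x :: nat assume h: "x ^ 2 dvd 3"
  then have "x ^ 2 \<le> 3" by (rule dvd_imp_le) simp
  then have "x < 2"
  proof -
    assume h3: "x ^ 2 \<le> 3"
    show "x < 2"
    proof (rule ccontr)
      assume "\<not> x < 2"
      then have "(2::nat) ^ 2 \<le> x ^ 2" by (intro power_mono) auto
      then show False using h3 by simp
    qed
  qed
  moreover have "x \<noteq> 0"
  proof
    assume "x = 0" then have "(0::nat) dvd 3" using h by simp
    then show False by simp
  qed
  ultimately show "x dvd 1" by simp
qed

lemma F_lower:
  assumes d: "d > 0" "squarefree d" and z: "z \<in> K1 d - roots_unity d"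
    and tab: "\<forall>j\<in>{..<Kp}. \<forall>a\<in>{..<N}. \<forall>b\<in>{..<M}. a * a + d * b * b = 4 * j * j \<longrightarrow> j dvd a \<and> j dvd b"
    and Kp: "K < Kp" and bN: "4 * K * K < N * N" and bM: "4 * K * K < d * M * M"
  shows "dz d z > K"
proof (rule ccontr)
  assume "\<not> dz d z > K"
  then have le: "dz d z \<le> K" by simp
  have zq: "z \<in> QF d" using z by (simp add: K1_def)
  obtain j where j: "1 \<le> j" "j \<le> dz d z" "of_nat j * z \<in> OK d" using dz_small[OF d zq] by blast
  have jK: "j \<in> {1..K}" using j le by simp
  have jKp: "j \<in> {..<Kp}" using jK Kp by simp
  have "4 * j * j \<le> 4 * K * K" using jK by (simp add: mult_le_mono)
  then have b1: "4 * j * j < N * N" "4 * j * j < d * M * M" using bN bM by linarith+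
  have tj: "\<forall>a\<in>{..<N}. \<forall>b\<in>{..<M}. a * a + d * b * b = 4 * j * j \<longrightarrow> j dvd a \<and> j dvd b" using tab jKp by blast
  show False
    using lower_bound[OF d z _ j(3)] dio_transfer[OF _ tj b1] j(1) by simp
qed

lemma lin_mult: "(r::complex) * r = c \<Longrightarrow>
  (P + Q * r) * (U + V * r) = (P * U + c * Q * V) + (P * V + Q * U) * r"
proof -
  assume h: "r * r = c"
  have "(P + Q * r) * (U + V * r) = P * U + Q * V * (r * r) + (P * V + Q * U) * r"
    by (simp add: algebra_simps)
  then show ?thesis using h by (simp add: algebra_simps)
qed

lemma mod4_one: "(1 + 4 * X) mod 4 = (1::int)"
  by simp

lemma sq_mod4: "(A::int) ^ 2 mod 4 = (if even A then 0 else 1)"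
proof (cases "even A")
  case True
  then obtain k where "A = 2 * k" by (elim evenE)
  then have "A ^ 2 = 4 * (k * k)" by (simp add: power2_eq_square)
  then show ?thesis using True by simp
next
  case False
  then obtain k where "A = 2 * k + 1" by (elim oddE)
  then have "A ^ 2 = 1 + 4 * (k * k + k)" by (simp add: power2_eq_square algebra_simps)
  moreover have "(1 + 4 * (k * k + k)) mod 4 = 1" by (rule mod4_one)
  ultimately show ?thesis using False by simp
qed

lemma even_sq1: assumes "4 dvd (A::int) ^ 2 + B ^ 2" shows "even A \<and> even B"
proof -
  have "(A ^ 2 + B ^ 2) mod 4 = 0" using assms by simp
  moreover have "(A ^ 2 + B ^ 2) mod 4 = (A ^ 2 mod 4 + B ^ 2 mod 4) mod 4" by (simp add: mod_add_eq)
  ultimately show ?thesis unfolding sq_mod4 by (auto split: if_splits)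
qed

lemma even_sq3: assumes "4 dvd (A::int) ^ 2 + 3 * B ^ 2" shows "even (A - B)"
proof -
  have "(A ^ 2 + 3 * B ^ 2) mod 4 = 0" using assms by simp
  moreover have "(A ^ 2 + 3 * B ^ 2) mod 4 = (A ^ 2 mod 4 + 3 * (B ^ 2 mod 4)) mod 4"
  proof -
    have "(A ^ 2 mod 4 + 3 * (B ^ 2 mod 4)) mod 4 = (A ^ 2 + 3 * (B ^ 2 mod 4)) mod 4"
      by (simp add: mod_simps)
    also have "\<dots> = (A ^ 2 + (3 * (B ^ 2 mod 4)) mod 4) mod 4" by (rule mod_add_right_eq[symmetric])
    also have "(3 * (B ^ 2 mod 4)) mod 4 = (3 * B ^ 2) mod 4" by (rule mod_mult_right_eq)
    also have "(A ^ 2 + (3 * B ^ 2) mod 4) mod 4 = (A ^ 2 + 3 * B ^ 2) mod 4" by (rule mod_add_right_eq)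
    finally show ?thesis ..
  qed
  ultimately show ?thesis unfolding sq_mod4 by (auto split: if_splits)
qed

lemma dz_le:
  assumes d: "d > 0" and cov: "\<And>x. x \<in> OK d \<Longrightarrow> \<exists>j<V. x - of_nat j \<in> pi_z d z"
  shows "dz d z \<le> V"
proof -
  have I: "is_ideal d (pi_z d z)" by (rule pi_z_ideal[OF d])
  have "coset (pi_z d z) ` OK d \<subseteq> (\<lambda>j. coset (pi_z d z) (of_nat j)) ` {..<V}"
  proof
    fix C assume "C \<in> coset (pi_z d z) ` OK d"
    then obtain x where x: "x \<in> OK d" "C = coset (pi_z d z) x" by blast
    obtain j where j: "j < V" "x - of_nat j \<in> pi_z d z" using cov[OF x(1)] by blast
    have "C = coset (pi_z d z) (of_nat j)" using x(2) coset_eq[OF I j(2)] by simp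
    then show "C \<in> (\<lambda>j. coset (pi_z d z) (of_nat j)) ` {..<V}" using j(1) by blast
  qed
  then have "card (coset (pi_z d z) ` OK d) \<le> card ((\<lambda>j. coset (pi_z d z) (of_nat j)) ` {..<V})"
    by (rule card_mono[rotated]) simp
  also have "\<dots> \<le> card {..<V}" by (rule card_image_le) simp
  finally show ?thesis unfolding dz_def ideal_norm_coset by simp
qed

lemma F_value:
  assumes z0: "z0 \<in> K1 d - roots_unity d" and up: "dz d z0 \<le> V"
    and low: "\<And>z. z \<in> K1 d - roots_unity d \<Longrightarrow> V \<le> dz d z"
  shows "F d = V"
proof -
  have "dz d z0 = V" using up low[OF z0] by simp
  then have "V \<in> dz d ` (K1 d - roots_unity d)" using z0 by force
  moreover have "\<And>x. x \<in> dz d ` (K1 d - roots_unity d) \<Longrightarrow> V \<le> x" using low by blast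
  ultimately show ?thesis unfolding F_def by (rule cInf_eq_minimum)
qed

lemma rr1_sq: "rr 1 * rr 1 = -1" using rr_sq[of 1] by simp
lemma rr3_sq: "rr 3 * rr 3 = -3" using rr_sq[of 3] by simp

lemma F1: "F 1 = 5"
proof -
  define z0 where "z0 = (3 + 4 * rr 1) / 5"
  have z0q: "z0 \<in> QF 1" unfolding QF_alt z0_def
    by (rule bexI[of _ "3/5"], rule bexI[of _ "4/5"]) (simp_all add: field_simps)
  have z0n: "z0 * cnj z0 = 1"
  proof -
    have "z0 * cnj z0 = ((3 + 4 * rr 1) * (3 + (-4) * rr 1)) / 25" unfolding z0_def by (simp add: field_simps)
    also have "(3 + 4 * rr 1) * (3 + (-4) * rr 1) = 25" using lin_mult[OF rr1_sq, of 3 4 3 "-4"] by simp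
    finally show ?thesis by simp
  qed
  have z0r: "z0 \<notin> roots_unity 1"
  proof
    assume "z0 \<in> roots_unity 1"
    then have zOK: "z0 \<in> OK 1" by (rule root_OK)
    have "\<exists>A B::int. z0 = (of_int A + of_int B * rr 1) / 2 \<and> 4 dvd (A ^ 2 + int 1 * B ^ 2)"
      by (rule OK_half[OF _ sf1 zOK]) simp
    then obtain A B where AB: "z0 = (of_int A + of_int B * rr 1) / 2" by blast
    have eqc: "complex_of_real (3/5) + complex_of_real (4/5) * rr 1
        = complex_of_real (of_int A / 2) + complex_of_real (of_int B / 2) * rr 1"
      using AB unfolding z0_def by (simp add: field_simps)
    have "3/5 = (of_int A / 2 :: real)" using coord_unique[of 1, OF _ eqc] by simp
    then have "6 = 5 * A" by linarith
    then show False by presburger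
  qed
  have z0K: "z0 \<in> K1 1 - roots_unity 1" using z0q z0n z0r by (simp add: K1_def)
  have up: "dz 1 z0 \<le> 5"
  proof (rule dz_le)
    fix x assume x: "x \<in> OK 1"
    have "\<exists>A B::int. x = (of_int A + of_int B * rr 1) / 2 \<and> 4 dvd (A ^ 2 + int 1 * B ^ 2)"
      by (rule OK_half[OF _ sf1 x]) simp
    then obtain A B where AB: "x = (of_int A + of_int B * rr 1) / 2" "4 dvd A ^ 2 + int 1 * B ^ 2"
      by blast
    then have "even A \<and> even B" using even_sq1 by simp
    then obtain a b where ab: "A = 2 * a" "B = 2 * b" by (auto elim!: evenE)
    have xab: "x = of_int a + of_int b * rr 1" unfolding AB(1) ab by (simp add: field_simps)
    define j t where "j = (a + 2 * b) mod 5" and "t = (a + 2 * b) div 5"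
    have jt: "a + 2 * b = 5 * t + j" and j: "0 \<le> j" "j < 5" by (simp_all add: j_def t_def)
    have aj: "a - j = 5 * t - 2 * b" using jt by simp
    have "x - of_nat (nat j) = of_int (a - j) + of_int b * rr 1"
      using xab j by simp
    then have e1: "x - of_nat (nat j) = of_int (5 * t - 2 * b) + of_int b * rr 1"
      unfolding aj .
    have "(x - of_nat (nat j)) * z0 = ((of_int (5 * t - 2 * b) + of_int b * rr 1) * (3 + 4 * rr 1)) / 5"
      unfolding e1 z0_def by simp
    also have "(of_int (5 * t - 2 * b) + of_int b * rr 1) * (3 + 4 * rr 1)
        = of_int (5 * (3 * t - 2 * b)) + of_int (5 * (4 * t - b)) * rr 1"
      using lin_mult[OF rr1_sq, of "of_int (5 * t - 2 * b)" "of_int b" 3 4] by (simp add: algebra_simps)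
    also have "(of_int (5 * (3 * t - 2 * b)) + of_int (5 * (4 * t - b)) * rr 1) / 5
        = of_int (3 * t - 2 * b) + of_int (4 * t - b) * rr 1"
    proof -
      have "of_int (5 * (3 * t - 2 * b)) + of_int (5 * (4 * t - b)) * rr 1
          = 5 * (of_int (3 * t - 2 * b) + of_int (4 * t - b) * rr 1)"
        by (simp only: of_int_mult of_int_numeral) (simp add: algebra_simps)
      then show ?thesis by simp
    qed
    finally have eqz: "(x - of_nat (nat j)) * z0 = of_int (3 * t - 2 * b) + of_int (4 * t - b) * rr 1" .
    have "inZR 1 (of_int (3 * t - 2 * b) + of_int (4 * t - b) * rr 1)" unfolding inZR_def by blast
    then have "of_int (3 * t - 2 * b) + of_int (4 * t - b) * rr 1 \<in> OK 1" by (rule zr_OK[rotated]) simp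
    then have "(x - of_nat (nat j)) * z0 \<in> OK 1" unfolding eqz .
    moreover have "x - of_nat (nat j) \<in> OK 1" using OK_diff[of 1] x OK_nat by auto
    ultimately have "x - of_nat (nat j) \<in> pi_z 1 z0" unfolding pi_z_def by simp
    moreover have "nat j < 5" using j by simp
    ultimately show "\<exists>j<5. x - of_nat j \<in> pi_z 1 z0" by blast
  qed simp
  have low: "5 \<le> dz 1 z" if "z \<in> K1 1 - roots_unity 1" for z
    using F_lower[of 1 z 5 9 9 4, OF _ sf1 that tab1] by simp
  show ?thesis by (rule F_value[OF z0K up low])
qed

lemma F3: "F 3 = 7"
proof -
  define z0 where "z0 = (1 + 4 * rr 3) / 7"
  have z0q: "z0 \<in> QF 3" unfolding QF_alt z0_def
    by (rule bexI[of _ "1/7"], rule bexI[of _ "4/7"]) (simp_all add: field_simps)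
  have z0n: "z0 * cnj z0 = 1"
  proof -
    have "z0 * cnj z0 = ((1 + 4 * rr 3) * (1 + (-4) * rr 3)) / 49" unfolding z0_def by (simp add: field_simps)
    also have "(1 + 4 * rr 3) * (1 + (-4) * rr 3) = 49" using lin_mult[OF rr3_sq, of 1 4 1 "-4"] by simp
    finally show ?thesis by simp
  qed
  have z0r: "z0 \<notin> roots_unity 3"
  proof
    assume "z0 \<in> roots_unity 3"
    then have zOK: "z0 \<in> OK 3" by (rule root_OK)
    have "\<exists>A B::int. z0 = (of_int A + of_int B * rr 3) / 2 \<and> 4 dvd (A ^ 2 + int 3 * B ^ 2)"
      by (rule OK_half[OF _ sf3 zOK]) simp
    then obtain A B where AB: "z0 = (of_int A + of_int B * rr 3) / 2" by blast
    have eqc: "complex_of_real (1/7) + complex_of_real (4/7) * rr 3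
        = complex_of_real (of_int A / 2) + complex_of_real (of_int B / 2) * rr 3"
      using AB unfolding z0_def by (simp add: field_simps)
    have "1/7 = (of_int A / 2 :: real)" using coord_unique[of 3, OF _ eqc] by simp
    then have "2 = 7 * A" by linarith
    then show False by presburger
  qed
  have z0K: "z0 \<in> K1 3 - roots_unity 3" using z0q z0n z0r by (simp add: K1_def)
  have up: "dz 3 z0 \<le> 7"
  proof (rule dz_le)
    fix x assume x: "x \<in> OK 3"
    have "\<exists>A B::int. x = (of_int A + of_int B * rr 3) / 2 \<and> 4 dvd (A ^ 2 + int 3 * B ^ 2)"
      by (rule OK_half[OF _ sf3 x]) simp
    then obtain A B where AB: "x = (of_int A + of_int B * rr 3) / 2" "4 dvd A ^ 2 + int 3 * B ^ 2"
      by blast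
    then have "even (A - B)" using even_sq3 by simp
    then obtain a where a: "A - B = 2 * a" by (elim evenE)
    define j t where "j = (a + 5 * B) mod 7" and "t = (a + 5 * B) div 7"
    have jt: "a + 5 * B = 7 * t + j" and j: "0 \<le> j" "j < 7" by (simp_all add: j_def t_def)
    have Aj: "A - 2 * j = 14 * t - 9 * B" using jt a by simp
    have "x - of_nat (nat j) = (of_int A + of_int B * rr 3) / 2 - of_int j"
      unfolding AB(1) using j by simp
    also have "\<dots> = (of_int (A - 2 * j) + of_int B * rr 3) / 2" by (simp add: field_simps)
    finally have e1: "x - of_nat (nat j) = (of_int (14 * t - 9 * B) + of_int B * rr 3) / 2"
      unfolding Aj .
    have "(x - of_nat (nat j)) * z0 = ((of_int (14 * t - 9 * B) + of_int B * rr 3) * (1 + 4 * rr 3)) / 14"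
      unfolding e1 z0_def by simp
    also have "(of_int (14 * t - 9 * B) + of_int B * rr 3) * (1 + 4 * rr 3)
        = of_int (7 * (2 * t - 3 * B)) + of_int (7 * (8 * t - 5 * B)) * rr 3"
      using lin_mult[OF rr3_sq, of "of_int (14 * t - 9 * B)" "of_int B" 1 4] by (simp add: algebra_simps)
    also have "(of_int (7 * (2 * t - 3 * B)) + of_int (7 * (8 * t - 5 * B)) * rr 3) / 14
        = (of_int (2 * t - 3 * B) + of_int (8 * t - 5 * B) * rr 3) / 2"
    proof -
      have "of_int (7 * (2 * t - 3 * B)) + of_int (7 * (8 * t - 5 * B)) * rr 3
          = 7 * (of_int (2 * t - 3 * B) + of_int (8 * t - 5 * B) * rr 3)"
        by (simp only: of_int_mult of_int_numeral) (simp add: algebra_simps)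
      then show ?thesis by simp
    qed
    finally have eqz: "(x - of_nat (nat j)) * z0 = (of_int (2 * t - 3 * B) + of_int (8 * t - 5 * B) * rr 3) / 2" .
    have "(2 * t - 3 * B) ^ 2 + int 3 * (8 * t - 5 * B) ^ 2 = 4 * (49 * t * t - 63 * t * B + 21 * B * B)"
      by (simp add: power2_eq_square algebra_simps)
    then have "4 dvd (2 * t - 3 * B) ^ 2 + int 3 * (8 * t - 5 * B) ^ 2" by simp
    then have "(of_int (2 * t - 3 * B) + of_int (8 * t - 5 * B) * rr 3) / 2 \<in> OK 3"
      by (rule half_OK[rotated]) simp
    then have "(x - of_nat (nat j)) * z0 \<in> OK 3" unfolding eqz .
    moreover have "x - of_nat (nat j) \<in> OK 3" using OK_diff[of 3] x OK_nat by auto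
    ultimately have "x - of_nat (nat j) \<in> pi_z 3 z0" unfolding pi_z_def by simp
    moreover have "nat j < 7" using j by simp
    ultimately show "\<exists>j<7. x - of_nat j \<in> pi_z 3 z0" by blast
  qed simp
  have low: "7 \<le> dz 3 z" if "z \<in> K1 3 - roots_unity 3" for z
    using F_lower[of 3 z 7 13 7 6, OF _ sf3 that tab3] by simp
  show ?thesis by (rule F_value[OF z0K up low])
qed

theorem lemma28:
  fixes d :: nat
  assumes "d > 0" and "squarefree d"
  shows "F d = Inf (ideal_norm d ` JJ d) \<and> F 1 = 5 \<and> F 3 = 7"
  using F_main[OF assms] F1 F3 by blast

end
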